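(* Let $V$ be a simple Yetter-Drinfeld module over $H=B(n,w,\gamma)$ with $\dim_\Bbbk V=p+1$ for some $p\ge0$, and let $v\in V$ be a standard element of type $(\alpha,\beta,x^rg^i)$ with $\alpha,\beta\in\Bbbk^*$, $r,i\in\mathbb{Z}$. If $\beta^n=1$, then $c_\beta^{r,i}(p+1,l)=0$ for all $0\le l\le p$.
   Context: $\Bbbk$ is an algebraically closed field of characteristic $0$; $n,w$ positive integers, $\gamma$ a primitive $n$-th root of unity. $H=B(n,w,\gamma)$ is the Hopf algebra generated by $x^{\pm1},g,y$ with relations $xx^{-1}=x^{-1}x=1$, $xg=gx$, $xy=yx$, $yg=\gamma gy$, $y^n=1-x^w=1-g^n$, with $\Delta(x)=x\otimes x$, $\Delta(g)=g\otimes g$, $\Delta(y)=y\otimes g+1\otimes y$, $\varepsilon(x)=\varepsilon(g)=1$, $\varepsilon(y)=0$, $S(x)=x^{-1}$, $S(g)=g^{-1}$, $S(y)=-yg^{-1}$; $G(H)=\{g^jx^k\}$. A (left-left) Yetter-Drinfeld module is a left $H$-module, left $H$-comodule $(V,\cdot,\delta)$ with $\delta(h\cdot v)=h_{(1)}v_{(-1)}S(h_{(3)})\otimes h_{(2)}\cdot v_{(0)}$; simple means no nonzero proper Yetter-Drinfeld submodules. A nonzero $v\in V$ is a standard element of type $(\alpha,\beta,h)$ if $h\in G(H)$, $\alpha,\beta\in\Bbbk^*$, $x\cdot v=\alpha v$, $g\cdot v=\beta v$, $\delta(v)=h\otimes v$. The elements $c_\beta^{r,i}(k,l)\in H$ ($0\le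 l\le k$) are defined by $c_\beta^{r,i}(0,0)=x^rg^i$ and, for $k\ge0$: $c_\beta^{r,i}(k+1,0)=c_\beta^{r,i}(k,0)S(y)+\beta yc_\beta^{r,i}(k,0)S(g)$; for $0<l<k+1$, $c_\beta^{r,i}(k+1,l)=c_\beta^{r,i}(k,l)S(y)+\beta\gamma^{-l}yc_\beta^{r,i}(k,l)S(g)+c_\beta^{r,i}(k,l-1)S(g)$; $c_\beta^{r,i}(k+1,k+1)=c_\beta^{r,i}(k,k)S(g)$. *)

theory Defs
  imports "HOL-Computational_Algebra.Polynomial"
begin

text \<open>Basis: y^j g^a x^k with 0 <= j < n, 0 <= a < n, k an integer; the index (j,a,k)
  stands for that basis element.\<close>

type_synonym bidx = "nat \<times> nat \<times> int"
type_synonym 'k hel = "bidx \<Rightarrow> 'k"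
type_synonym 'k vec = "nat \<Rightarrow> 'k"

definition supp :: "('a \<Rightarrow> 'b::zero) \<Rightarrow> 'a set" where
  "supp f = {b. f b \<noteq> 0}"

definition suppV :: "('a \<Rightarrow> ('k::zero) vec) \<Rightarrow> 'a set" where
  "suppV f = {b. f b \<noteq> (\<lambda>_. 0)}"

definition valid :: "nat \<Rightarrow> bidx \<Rightarrow> bool" where
  "valid n b \<longleftrightarrow> fst b < n \<and> fst (snd b) < n"

definition Hc :: "nat \<Rightarrow> ('k::field) hel set" where
  "Hc n = {h. finite (supp h) \<and> (\<forall>b. h b \<noteq> 0 \<longrightarrow> valid n b)}"

definition bas :: "bidx \<Rightarrow> ('k::field) hel" where
  "bas b = (\<lambda>b'. if b' = b then 1 else 0)"

definition hadd :: "('k::field) hel \<Rightarrow> 'k hel \<Rightarrow> 'k hel" where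
  "hadd h h' = (\<lambda>b. h b + h' b)"

definition hsc :: "'k::field \<Rightarrow> 'k hel \<Rightarrow> 'k hel" where
  "hsc c h = (\<lambda>b. c * h b)"

text \<open>normal form of g^a x^k (a, k integers), using g^n = x^w\<close>
definition gxi :: "nat \<Rightarrow> nat \<Rightarrow> int \<Rightarrow> int \<Rightarrow> nat \<times> int" where
  "gxi n w a k = (nat (a mod int n), k + int w * (a div int n))"

text \<open>the basis element y^j g^a x^k, for j < n and arbitrary integers a, k\<close>
definition mon :: "nat \<Rightarrow> nat \<Rightarrow> nat \<Rightarrow> int \<Rightarrow> int \<Rightarrow> ('k::field) hel" where
  "mon n w j a k = bas (j, fst (gxi n w a k), snd (gxi n w a k))"

text \<open>product of two basis elements (valid indices):
  y^j g^a x^k * y^j' g^a' x^k' = gamma^(-a j') y^(j+j') g^(a+a') x^(k+k'),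
  and y^(j+j') = y^(j+j'-n) (1 - x^w) if j+j' >= n.\<close>
definition mb :: "nat \<Rightarrow> nat \<Rightarrow> 'k::field \<Rightarrow> bidx \<Rightarrow> bidx \<Rightarrow> 'k hel" where
  "mb n w \<gamma> b b' =
    (let j = fst b; a = fst (snd b); k = snd (snd b);
         j' = fst b'; a' = fst (snd b'); k' = snd (snd b');
         c = (inverse \<gamma>) ^ (a * j') in
     if j + j' < n then hsc c (mon n w (j + j') (int a + int a') (k + k'))
     else hsc c (\<lambda>t. mon n w (j + j' - n) (int a + int a') (k + k') t
                    - mon n w (j + j' - n) (int a + int a') (k + k' + int w) t))"

definition hmul :: "nat \<Rightarrow> nat \<Rightarrow> 'k::field \<Rightarrow> 'k hel \<Rightarrow> 'k hel \<Rightarrow> 'k hel" where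
  "hmul n w \<gamma> h h' = (\<lambda>t. \<Sum>b\<in>supp h. \<Sum>b'\<in>supp h'. h b * h' b' * mb n w \<gamma> b b' t)"

definition oneH :: "('k::field) hel" where "oneH = bas (0, 0, 0)"
definition Xe :: "nat \<Rightarrow> nat \<Rightarrow> ('k::field) hel" where "Xe n w = mon n w 0 0 1"
definition Ge :: "nat \<Rightarrow> nat \<Rightarrow> ('k::field) hel" where "Ge n w = mon n w 0 1 0"
definition Ginv :: "nat \<Rightarrow> nat \<Rightarrow> ('k::field) hel" where "Ginv n w = mon n w 0 (-1) 0"
text \<open>y; if n = 1 then y = y^n = 1 - x^w\<close>
definition Ye :: "nat \<Rightarrow> nat \<Rightarrow> ('k::field) hel" where
  "Ye n w = (if 1 < n then mon n w 1 0 0 else (\<lambda>t. oneH t - mon n w 0 0 (int w) t))"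

definition SY :: "nat \<Rightarrow> nat \<Rightarrow> 'k::field \<Rightarrow> 'k hel" where
  "SY n w \<gamma> = hsc (-1) (hmul n w \<gamma> (Ye n w) (Ginv n w))"

text \<open>Antipode on basis elements: S(y^j g^a x^k) = g^{-a} x^{-k} S(y)^j\<close>
fun Sbas :: "nat \<Rightarrow> nat \<Rightarrow> 'k::field \<Rightarrow> nat \<Rightarrow> nat \<Rightarrow> int \<Rightarrow> 'k hel" where
  "Sbas n w \<gamma> 0 a k = mon n w 0 (- int a) (- k)"
| "Sbas n w \<gamma> (Suc j) a k = hmul n w \<gamma> (Sbas n w \<gamma> j a k) (SY n w \<gamma>)"

definition Santi :: "nat \<Rightarrow> nat \<Rightarrow> 'k::field \<Rightarrow> 'k hel \<Rightarrow> 'k hel" where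
  "Santi n w \<gamma> h = (\<lambda>t. \<Sum>b\<in>supp h. h b * Sbas n w \<gamma> (fst b) (fst (snd b)) (snd (snd b)) t)"

text \<open>H \<otimes> H as coefficient functions on pairs of indices\<close>
definition tens :: "('k::field) hel \<Rightarrow> 'k hel \<Rightarrow> (bidx \<times> bidx \<Rightarrow> 'k)" where
  "tens h h' = (\<lambda>(b, b'). h b * h' b')"

definition tmul :: "nat \<Rightarrow> nat \<Rightarrow> 'k::field \<Rightarrow> (bidx \<times> bidx \<Rightarrow> 'k) \<Rightarrow> (bidx \<times> bidx \<Rightarrow> 'k)
    \<Rightarrow> (bidx \<times> bidx \<Rightarrow> 'k)" where
  "tmul n w \<gamma> u u' = (\<lambda>(t, t'). \<Sum>p\<in>supp u. \<Sum>p'\<in>supp u'.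
      u p * u' p' * mb n w \<gamma> (fst p) (fst p') t * mb n w \<gamma> (snd p) (snd p') t')"

definition DY :: "nat \<Rightarrow> nat \<Rightarrow> (bidx \<times> bidx \<Rightarrow> 'k::field)" where
  "DY n w = (\<lambda>q. tens (Ye n w) (Ge n w) q + tens oneH (Ye n w) q)"

text \<open>Coproduct on basis elements: Delta(y^j g^a x^k) = Delta(y)^j (g^a x^k \<otimes> g^a x^k)\<close>
fun Dbas :: "nat \<Rightarrow> nat \<Rightarrow> 'k::field \<Rightarrow> nat \<Rightarrow> nat \<Rightarrow> int \<Rightarrow> (bidx \<times> bidx \<Rightarrow> 'k)" where
  "Dbas n w \<gamma> 0 a k = tens (bas (0, a, k)) (bas (0, a, k))"
| "Dbas n w \<gamma> (Suc j) a k = tmul n w \<gamma> (DY n w) (Dbas n w \<gamma> j a k)"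

definition Delta :: "nat \<Rightarrow> nat \<Rightarrow> 'k::field \<Rightarrow> 'k hel \<Rightarrow> (bidx \<times> bidx \<Rightarrow> 'k)" where
  "Delta n w \<gamma> h = (\<lambda>q. \<Sum>b\<in>supp h. h b * Dbas n w \<gamma> (fst b) (fst (snd b)) (snd (snd b)) q)"

text \<open>(Delta \<otimes> id) Delta, giving h_(1) \<otimes> h_(2) \<otimes> h_(3)\<close>
definition Delta2 :: "nat \<Rightarrow> nat \<Rightarrow> 'k::field \<Rightarrow> 'k hel \<Rightarrow> (bidx \<times> bidx \<times> bidx \<Rightarrow> 'k)" where
  "Delta2 n w \<gamma> h = (\<lambda>(b1, b2, b3). \<Sum>b\<in>{b. Delta n w \<gamma> h (b, b3) \<noteq> 0}.
      Delta n w \<gamma> h (b, b3) * Delta n w \<gamma> (bas b) (b1, b2))"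

definition epsH :: "('k::field) hel \<Rightarrow> 'k" where
  "epsH h = (\<Sum>b\<in>supp h. if fst b = 0 then h b else 0)"

text \<open>The (p+1)-dimensional space k^(p+1), as coordinate functions vanishing beyond p.\<close>
definition Vc :: "nat \<Rightarrow> ('k::field) vec set" where
  "Vc p = {v. \<forall>m>p. v m = 0}"

text \<open>Left-left Yetter-Drinfeld module structure on k^(p+1):
  act = module action, co = coaction, co v b = component of delta(v) at basis element b of H.\<close>
definition is_YD :: "nat \<Rightarrow> nat \<Rightarrow> 'k::field \<Rightarrow> nat \<Rightarrow> ('k hel \<Rightarrow> 'k vec \<Rightarrow> 'k vec)
    \<Rightarrow> ('k vec \<Rightarrow> bidx \<Rightarrow> 'k vec) \<Rightarrow> bool" where
  "is_YD n w \<gamma> p act co \<longleftrightarrow>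
    \<comment> \<open>module\<close>
    (\<forall>h\<in>Hc n. \<forall>v\<in>Vc p. act h v \<in> Vc p) \<and>
    (\<forall>h\<in>Hc n. \<forall>u\<in>Vc p. \<forall>v\<in>Vc p. act h (\<lambda>m. u m + v m) = (\<lambda>m. act h u m + act h v m)) \<and>
    (\<forall>h\<in>Hc n. \<forall>c. \<forall>v\<in>Vc p. act h (\<lambda>m. c * v m) = (\<lambda>m. c * act h v m)) \<and>
    (\<forall>h\<in>Hc n. \<forall>h'\<in>Hc n. \<forall>v\<in>Vc p. act (hadd h h') v = (\<lambda>m. act h v m + act h' v m)) \<and>
    (\<forall>h\<in>Hc n. \<forall>c. \<forall>v\<in>Vc p. act (hsc c h) v = (\<lambda>m. c * act h v m)) \<and>
    (\<forall>v\<in>Vc p. act oneH v = v) \<and>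
    (\<forall>h\<in>Hc n. \<forall>h'\<in>Hc n. \<forall>v\<in>Vc p. act (hmul n w \<gamma> h h') v = act h (act h' v)) \<and>
    \<comment> \<open>comodule\<close>
    (\<forall>v\<in>Vc p. finite (suppV (co v)) \<and> (\<forall>b. co v b \<in> Vc p) \<and>
       (\<forall>b. co v b \<noteq> (\<lambda>_. 0) \<longrightarrow> valid n b)) \<and>
    (\<forall>u\<in>Vc p. \<forall>v\<in>Vc p. \<forall>b. co (\<lambda>m. u m + v m) b = (\<lambda>m. co u b m + co v b m)) \<and>
    (\<forall>c. \<forall>v\<in>Vc p. \<forall>b. co (\<lambda>m. c * v m) b = (\<lambda>m. c * co v b m)) \<and>
    (\<forall>v\<in>Vc p. \<forall>b1 b2. co (co v b1) b2 =
        (\<lambda>m. \<Sum>b\<in>suppV (co v). Delta n w \<gamma> (bas b) (b1, b2) * co v b m)) \<and>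
    (\<forall>v\<in>Vc p. (\<lambda>m. \<Sum>b\<in>suppV (co v). epsH (bas b :: 'k hel) * co v b m) = v) \<and>
    \<comment> \<open>Yetter-Drinfeld compatibility\<close>
    (\<forall>h\<in>Hc n. \<forall>v\<in>Vc p. \<forall>t. co (act h v) t =
        (\<lambda>m. \<Sum>q\<in>supp (Delta2 n w \<gamma> h). \<Sum>b\<in>suppV (co v).
           Delta2 n w \<gamma> h q
           * hmul n w \<gamma> (hmul n w \<gamma> (bas (fst q)) (bas b)) (Santi n w \<gamma> (bas (snd (snd q)))) t
           * act (bas (fst (snd q))) (co v b) m))"

definition is_simple_YD :: "nat \<Rightarrow> nat \<Rightarrow> 'k::field \<Rightarrow> nat \<Rightarrow> ('k hel \<Rightarrow> 'k vec \<Rightarrow> 'k vec)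
    \<Rightarrow> ('k vec \<Rightarrow> bidx \<Rightarrow> 'k vec) \<Rightarrow> bool" where
  "is_simple_YD n w \<gamma> p act co \<longleftrightarrow>
    is_YD n w \<gamma> p act co \<and>
    (\<forall>W. W \<subseteq> Vc p \<and> (\<lambda>_. 0) \<in> W \<and>
         (\<forall>u\<in>W. \<forall>v\<in>W. (\<lambda>m. u m + v m) \<in> W) \<and> (\<forall>c. \<forall>v\<in>W. (\<lambda>m. c * v m) \<in> W) \<and>
         (\<forall>h\<in>Hc n. \<forall>v\<in>W. act h v \<in> W) \<and> (\<forall>v\<in>W. \<forall>b. co v b \<in> W)
       \<longrightarrow> W = {\<lambda>_. 0} \<or> W = Vc p)"

definition standard :: "nat \<Rightarrow> nat \<Rightarrow> nat \<Rightarrow> ('k::field hel \<Rightarrow> 'k vec \<Rightarrow> 'k vec)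
    \<Rightarrow> ('k vec \<Rightarrow> bidx \<Rightarrow> 'k vec) \<Rightarrow> 'k vec \<Rightarrow> 'k \<Rightarrow> 'k \<Rightarrow> int \<Rightarrow> int \<Rightarrow> bool" where
  "standard n w p act co v \<alpha> \<beta> r i \<longleftrightarrow>
    v \<in> Vc p \<and> v \<noteq> (\<lambda>_. 0) \<and> \<alpha> \<noteq> 0 \<and> \<beta> \<noteq> 0 \<and>
    act (Xe n w) v = (\<lambda>m. \<alpha> * v m) \<and> act (Ge n w) v = (\<lambda>m. \<beta> * v m) \<and>
    co v = (\<lambda>b. if b = (0, fst (gxi n w i r), snd (gxi n w i r)) then v else (\<lambda>_. 0))"

text \<open>the elements c_beta^{r,i}(k,l) (set to 0 outside 0 <= l <= k)\<close>
fun cc :: "nat \<Rightarrow> nat \<Rightarrow> 'k::field \<Rightarrow> 'k \<Rightarrow> int \<Rightarrow> int \<Rightarrow> nat \<Rightarrow> nat \<Rightarrow> 'k hel" where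
  "cc n w \<gamma> \<beta> r i 0 l = (if l = 0 then mon n w 0 i r else (\<lambda>_. 0))"
| "cc n w \<gamma> \<beta> r i (Suc k) l =
    (if l = 0 then
       hadd (hmul n w \<gamma> (cc n w \<gamma> \<beta> r i k 0) (SY n w \<gamma>))
            (hsc \<beta> (hmul n w \<gamma> (hmul n w \<gamma> (Ye n w) (cc n w \<gamma> \<beta> r i k 0)) (Ginv n w)))
     else if l < Suc k then
       hadd (hadd (hmul n w \<gamma> (cc n w \<gamma> \<beta> r i k l) (SY n w \<gamma>))
                  (hsc (\<beta> * (inverse \<gamma>) ^ l)
                       (hmul n w \<gamma> (hmul n w \<gamma> (Ye n w) (cc n w \<gamma> \<beta> r i k l)) (Ginv n w))))
            (hmul n w \<gamma> (cc n w \<gamma> \<beta> r i k (l - 1)) (Ginv n w))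
     else if l = Suc k then hmul n w \<gamma> (cc n w \<gamma> \<beta> r i k k) (Ginv n w)
     else (\<lambda>_. 0))"

end

theory Submission
  imports Defs "HOL-Library.Function_Algebras"
begin

lemma supp_bas[simp]: "supp (bas b :: 'k::field hel) = {b}"
  by (auto simp: supp_def bas_def)

lemma bas_apply: "bas b t = (if t = b then 1 else 0)"
  by (simp add: bas_def)

lemma hmul_bas_bas: "hmul n w \<gamma> (bas b) (bas b') = mb n w \<gamma> b b'"
  unfolding hmul_def supp_bas by (simp add: bas_def)

lemma gxi_nat: "a < n \<Longrightarrow> gxi n w (int a) k = (a, k)"
  by (simp add: gxi_def)

lemma mon_bas: "a < n \<Longrightarrow> mon n w j (int a) k = bas (j, a, k)"
  by (simp add: mon_def gxi_nat)

lemma mb_simp: "mb n w \<gamma> (j,a,k) (j',a',k') =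
   (if j + j' < n then hsc ((inverse \<gamma>) ^ (a * j')) (mon n w (j + j') (int a + int a') (k + k'))
     else hsc ((inverse \<gamma>) ^ (a * j')) (\<lambda>t. mon n w (j + j' - n) (int a + int a') (k + k') t
                    - mon n w (j + j' - n) (int a + int a') (k + k' + int w) t))"
  by (simp add: mb_def Let_def)

lemma finite_supp_bas_diff: "finite (supp (\<lambda>t. (bas b t :: 'k::field) - bas b' t))"
  by (rule finite_subset[of _ "{b,b'}"]) (auto simp: supp_def bas_def)

lemma finite_supp_hsc: "finite (supp h) \<Longrightarrow> finite (supp (hsc c h))"
  by (rule finite_subset[of _ "supp h"]) (auto simp: supp_def hsc_def)

lemma finite_supp_mb: "finite (supp (mb n w \<gamma> b b'))"
  unfolding mb_def Let_def mon_def
  by (auto intro!: finite_supp_hsc finite_supp_bas_diff)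

lemma finite_supp_hmul:
  assumes "finite (supp f)" "finite (supp g)"
  shows "finite (supp (hmul n w \<gamma> f g))"
proof -
  have "supp (hmul n w \<gamma> f g) \<subseteq> (\<Union>a\<in>supp f. \<Union>b\<in>supp g. supp (mb n w \<gamma> a b))"
  proof
    fix t assume "t \<in> supp (hmul n w \<gamma> f g)"
    then have "(\<Sum>a\<in>supp f. \<Sum>b\<in>supp g. f a * g b * mb n w \<gamma> a b t) \<noteq> 0"
      by (simp add: supp_def hmul_def)
    then obtain a where a: "a \<in> supp f" "(\<Sum>b\<in>supp g. f a * g b * mb n w \<gamma> a b t) \<noteq> 0"
      by (meson sum.neutral)
    then obtain b where b: "b \<in> supp g" "f a * g b * mb n w \<gamma> a b t \<noteq> 0"
      by (meson sum.neutral)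
    have "t \<in> supp (mb n w \<gamma> a b)" using b(2) by (simp add: supp_def)
    then show "t \<in> (\<Union>a\<in>supp f. \<Union>b\<in>supp g. supp (mb n w \<gamma> a b))"
      using a(1) b(1) by blast
  qed
  then show ?thesis using assms finite_supp_mb by (meson finite_UN_I finite_subset)
qed

lemma hmul_expand_left:
  assumes "finite A" "supp f \<subseteq> A"
  shows "hmul n w \<gamma> f g t = (\<Sum>a\<in>A. f a * (\<Sum>b\<in>supp g. g b * mb n w \<gamma> a b t))"
proof -
  have "hmul n w \<gamma> f g t = (\<Sum>a\<in>supp f. f a * (\<Sum>b\<in>supp g. g b * mb n w \<gamma> a b t))"
    unfolding hmul_def by (simp add: sum_distrib_left mult.assoc)
  also have "\<dots> = (\<Sum>a\<in>A. f a * (\<Sum>b\<in>supp g. g b * mb n w \<gamma> a b t))"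
    by (rule sum.mono_neutral_left) (use assms in \<open>auto simp: supp_def\<close>)
  finally show ?thesis .
qed

lemma hmul_bas_left: "hmul n w \<gamma> (bas a) g t = (\<Sum>b\<in>supp g. g b * mb n w \<gamma> a b t)"
  by (subst hmul_expand_left[of "{a}"]) (auto simp: bas_apply)

lemma hmul_lin_left:
  assumes "finite B" "supp h \<subseteq> B"
  shows "hmul n w \<gamma> h g t = (\<Sum>b\<in>B. h b * hmul n w \<gamma> (bas b) g t)"
  using hmul_expand_left[OF assms] by (simp add: hmul_bas_left)

lemma hmul_lin_right:
  assumes "finite B" "supp h \<subseteq> B"
  shows "hmul n w \<gamma> g h t = (\<Sum>b\<in>B. h b * hmul n w \<gamma> g (bas b) t)"
proof -
  have "hmul n w \<gamma> g h t = (\<Sum>a\<in>supp g. \<Sum>b\<in>B. g a * h b * mb n w \<gamma> a b t)"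
    unfolding hmul_def
    by (rule sum.cong[OF refl], rule sum.mono_neutral_left) (use assms in \<open>auto simp: supp_def\<close>)
  also have "\<dots> = (\<Sum>b\<in>B. \<Sum>a\<in>supp g. g a * h b * mb n w \<gamma> a b t)"
    by (rule sum.swap)
  also have "\<dots> = (\<Sum>b\<in>B. h b * hmul n w \<gamma> g (bas b) t)"
    unfolding hmul_def supp_bas by (simp add: sum_distrib_left bas_apply mult_ac)
  finally show ?thesis .
qed

lemma hmul_comb_left:
  assumes B: "finite B" and F: "\<And>b. b \<in> B \<Longrightarrow> finite (supp (F b))"
  shows "hmul n w \<gamma> (\<lambda>s. \<Sum>b\<in>B. c b * F b s) g t = (\<Sum>b\<in>B. c b * hmul n w \<gamma> (F b) g t)"
proof -
  define A where "A = (\<Union>b\<in>B. supp (F b))"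
  have fA: "finite A" using B F by (simp add: A_def)
  have "supp (\<lambda>s. \<Sum>b\<in>B. c b * F b s) \<subseteq> A"
  proof
    fix s assume "s \<in> supp (\<lambda>s. \<Sum>b\<in>B. c b * F b s)"
    then have "(\<Sum>b\<in>B. c b * F b s) \<noteq> 0" by (simp add: supp_def)
    then obtain b where "b \<in> B" "c b * F b s \<noteq> 0" by (meson sum.neutral)
    then show "s \<in> A" by (auto simp: A_def supp_def)
  qed
  then have "hmul n w \<gamma> (\<lambda>s. \<Sum>b\<in>B. c b * F b s) g t
      = (\<Sum>a\<in>A. (\<Sum>b\<in>B. c b * F b a) * (\<Sum>b'\<in>supp g. g b' * mb n w \<gamma> a b' t))"
    by (rule hmul_expand_left[OF fA])
  also have "\<dots> = (\<Sum>b\<in>B. c b * (\<Sum>a\<in>A. F b a * (\<Sum>b'\<in>supp g. g b' * mb n w \<gamma> a b' t)))"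
  proof -
    define K where "K a = (\<Sum>b'\<in>supp g. g b' * mb n w \<gamma> a b' t)" for a
    have "(\<Sum>a\<in>A. (\<Sum>b\<in>B. c b * F b a) * K a) = (\<Sum>a\<in>A. \<Sum>b\<in>B. c b * (F b a * K a))"
      by (simp add: sum_distrib_right mult.assoc)
    also have "\<dots> = (\<Sum>b\<in>B. \<Sum>a\<in>A. c b * (F b a * K a))" by (rule sum.swap)
    also have "\<dots> = (\<Sum>b\<in>B. c b * (\<Sum>a\<in>A. F b a * K a))" by (simp add: sum_distrib_left)
    finally show ?thesis by (simp add: K_def)
  qed
  also have "\<dots> = (\<Sum>b\<in>B. c b * hmul n w \<gamma> (F b) g t)"
    by (rule sum.cong[OF refl], subst hmul_expand_left[OF fA]) (auto simp: A_def)
  finally show ?thesis .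
qed

lemma hsc_1[simp]: "hsc 1 h = h" by (simp add: hsc_def)

lemma Hc_bas: "valid n b \<Longrightarrow> bas b \<in> Hc n"
  by (auto simp: Hc_def bas_def supp_def)

lemma valid_mon_idx: "0 < n \<Longrightarrow> j < n \<Longrightarrow> valid n (j, fst (gxi n w a k), snd (gxi n w a k))"
  by (simp add: valid_def gxi_def nat_less_iff)

lemma Hc_mon: "0 < n \<Longrightarrow> j < n \<Longrightarrow> mon n w j a k \<in> Hc n"
  unfolding mon_def by (rule Hc_bas) (rule valid_mon_idx)

lemma Hc_valid: "h \<in> Hc n \<Longrightarrow> h b \<noteq> 0 \<Longrightarrow> valid n b"
  unfolding Hc_def by blast

lemma Hc_fin: "h \<in> Hc n \<Longrightarrow> finite (supp h)"
  unfolding Hc_def by blast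

lemma HcI: "finite (supp h) \<Longrightarrow> (\<And>b. h b \<noteq> 0 \<Longrightarrow> valid n b) \<Longrightarrow> h \<in> Hc n"
  unfolding Hc_def by blast

lemma Hc_hsc: "h \<in> Hc n \<Longrightarrow> hsc c h \<in> Hc n"
  unfolding Hc_def hsc_def
  by (auto intro: finite_subset[of _ "supp h"] simp: supp_def)

lemma Hc_hadd: assumes "h \<in> Hc n" "h' \<in> Hc n" shows "hadd h h' \<in> Hc n"
proof (rule HcI)
  show "finite (supp (hadd h h'))"
  proof (rule finite_subset)
    show "supp (hadd h h') \<subseteq> supp h \<union> supp h'" by (auto simp: supp_def hadd_def)
    show "finite (supp h \<union> supp h')" using assms Hc_fin by blast
  qed
  fix b assume "hadd h h' b \<noteq> 0"
  then have "h b \<noteq> 0 \<or> h' b \<noteq> 0" by (auto simp: hadd_def)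
  then show "valid n b" using assms Hc_valid by blast
qed

lemma Hc_diff: assumes "h \<in> Hc n" "h' \<in> Hc n" shows "(\<lambda>t. h t - h' t) \<in> Hc n"
proof (rule HcI)
  show "finite (supp (\<lambda>t. h t - h' t))"
  proof (rule finite_subset)
    show "supp (\<lambda>t. h t - h' t) \<subseteq> supp h \<union> supp h'" by (auto simp: supp_def)
    show "finite (supp h \<union> supp h')" using assms Hc_fin by blast
  qed
  fix b assume "h b - h' b \<noteq> 0"
  then have "h b \<noteq> 0 \<or> h' b \<noteq> 0" by auto
  then show "valid n b" using assms Hc_valid by blast
qed

lemma Hc_zero: "(\<lambda>_. 0) \<in> Hc n"
  by (simp add: Hc_def supp_def)

lemma Hc_mb: "0 < n \<Longrightarrow> fst a < n \<Longrightarrow> fst b < n \<Longrightarrow> mb n w \<gamma> a b \<in> Hc n"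
  unfolding mb_def Let_def
  by (auto intro!: Hc_hsc Hc_mon Hc_diff)

lemma Hc_hmul:
  assumes n: "0 < n" and f: "f \<in> Hc n" and g: "g \<in> Hc n"
  shows "hmul n w \<gamma> f g \<in> Hc n"
proof -
  have fin: "finite (supp (hmul n w \<gamma> f g))"
    using f g by (intro finite_supp_hmul) (auto simp: Hc_def)
  have "valid n t" if "hmul n w \<gamma> f g t \<noteq> 0" for t
  proof -
    from that have "(\<Sum>a\<in>supp f. \<Sum>b\<in>supp g. f a * g b * mb n w \<gamma> a b t) \<noteq> 0"
      by (simp add: hmul_def)
    then obtain a where a: "a \<in> supp f" "(\<Sum>b\<in>supp g. f a * g b * mb n w \<gamma> a b t) \<noteq> 0"
      by (meson sum.neutral)
    then obtain b where b: "b \<in> supp g" "f a * g b * mb n w \<gamma> a b t \<noteq> 0"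
      by (meson sum.neutral)
    have va: "valid n a" using a(1) f Hc_valid by (simp add: supp_def)
    have vb: "valid n b" using b(1) g Hc_valid by (simp add: supp_def)
    have "mb n w \<gamma> a b \<in> Hc n" using va vb n by (intro Hc_mb) (auto simp: valid_def)
    then show ?thesis using b(2) Hc_valid[of "mb n w \<gamma> a b" n t] by auto
  qed
  then show ?thesis using fin by (simp add: Hc_def)
qed

lemma mb_small:
  assumes a: "j + j' < n" "a + a' < n"
  shows "mb n w \<gamma> (j,a,k) (j',a',k') = hsc ((inverse \<gamma>) ^ (a * j')) (bas (j+j', a+a', k+k'))"
proof -
  have e: "mon n w (j+j') (int a + int a') (k+k') = bas (j+j', a+a', k+k')"
    using mon_bas[of "a+a'" n w "j+j'" "k+k'"] a by (metis of_nat_add)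
  show ?thesis unfolding mb_simp e using a(1) by simp
qed

lemma hmul_one_left:
  assumes "0 < n" "h \<in> Hc n"
  shows "hmul n w \<gamma> oneH h = h"
proof
  fix t
  have fin: "finite (supp h)" using assms by (simp add: Hc_def)
  have "hmul n w \<gamma> oneH h t = (\<Sum>b\<in>supp h. h b * hmul n w \<gamma> oneH (bas b) t)"
    by (rule hmul_lin_right[OF fin subset_refl])
  also have "\<dots> = (\<Sum>b\<in>supp h. h b * bas b t)"
  proof (rule sum.cong[OF refl])
    fix b assume "b \<in> supp h"
    then have "valid n b" using assms Hc_valid by (simp add: supp_def)
    then obtain j a k where b: "b = (j,a,k)" "j < n" "a < n" by (cases b) (auto simp: valid_def)
    show "h b * hmul n w \<gamma> oneH (bas b) t = h b * bas b t"
      unfolding oneH_def hmul_bas_bas b(1) using b mb_small[of 0 j n 0 a w \<gamma> 0 k] by simp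
  qed
  also have "\<dots> = h t"
  proof -
    have "(\<Sum>b\<in>supp h. h b * bas b t) = (\<Sum>b\<in>supp h. if t = b then h b else 0)"
      by (rule sum.cong) (auto simp: bas_apply)
    also have "\<dots> = (if t \<in> supp h then h t else 0)" using fin by (simp add: sum.delta)
    also have "\<dots> = h t" by (simp add: supp_def)
    finally show ?thesis .
  qed
  finally show "hmul n w \<gamma> oneH h t = h t" .
qed


lemma hmul_zero_left[simp]: "hmul n w \<gamma> (\<lambda>_. 0) g = (\<lambda>_. 0)"
  by (simp add: hmul_def supp_def)

lemma hmul_zero_right[simp]: "hmul n w \<gamma> g (\<lambda>_. 0) = (\<lambda>_. 0)"
  by (simp add: hmul_def supp_def)

lemma hsc_zero[simp]: "hsc c (\<lambda>_. 0) = (\<lambda>_. 0)" by (simp add: hsc_def)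
lemma hadd_zero[simp]: "hadd (\<lambda>_. 0) (\<lambda>_. 0) = (\<lambda>_. 0)" by (simp add: hadd_def)

section \<open>The case n = 1\<close>

definition sh :: "int \<Rightarrow> ('k::field) hel \<Rightarrow> 'k hel" where
  "sh a f = (\<lambda>(j, aa, k). if j = 0 \<and> aa = 0 then f (0, 0, k - a) else 0)"

lemma mon1: "mon 1 w j a k = bas (j, 0, k + int w * a)"
  by (simp add: mon_def gxi_def)

lemma mb1: "mb 1 w \<gamma> (0,0,k) (0,0,k') = bas (0, 0, k + k')"
  by (simp add: mb_def Let_def mon_def gxi_def)

lemma hmul1_right:
  assumes f: "f \<in> Hc 1"
  shows "hmul 1 w \<gamma> f (bas (0,0,a)) = sh a f"
proof
  fix t :: bidx
  obtain j aa k where t: "t = (j, aa, k)" by (cases t)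
  have fin: "finite (supp f)" using f Hc_fin by blast
  have vb: "b = (0, 0, snd (snd b))" if "b \<in> supp f" for b
    using Hc_valid[OF f, of b] that by (cases b) (auto simp: supp_def valid_def)
  have "hmul 1 w \<gamma> f (bas (0,0,a)) t = (\<Sum>b\<in>supp f. f b * mb 1 w \<gamma> b (0,0,a) t)"
    unfolding hmul_def supp_bas by (simp add: bas_apply)
  also have "\<dots> = (\<Sum>b\<in>supp f. if b = (0, 0, k - a) \<and> j = 0 \<and> aa = 0 then f b else 0)"
  proof (rule sum.cong[OF refl])
    fix b assume b: "b \<in> supp f"
    have "mb 1 w \<gamma> b (0,0,a) t = bas (0, 0, snd (snd b) + a) t"
      using vb[OF b] mb1 by metis
    then show "f b * mb 1 w \<gamma> b (0,0,a) t = (if b = (0, 0, k - a) \<and> j = 0 \<and> aa = 0 then f b else 0)"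
      using vb[OF b] t by (cases b) (auto simp: bas_apply)
  qed
  also have "\<dots> = sh a f t"
  proof (cases "j = 0 \<and> aa = 0")
    case True then show ?thesis by (simp add: sum.delta[OF fin] sh_def t) (simp add: supp_def)
  next
    case False then show ?thesis by (auto simp: sh_def t)
  qed
  finally show "hmul 1 w \<gamma> f (bas (0,0,a)) t = sh a f t" .
qed

lemma hmul1_left:
  assumes f: "f \<in> Hc 1"
  shows "hmul 1 w \<gamma> (bas (0,0,a)) f = sh a f"
proof
  fix t :: bidx
  obtain j aa k where t: "t = (j, aa, k)" by (cases t)
  have fin: "finite (supp f)" using f Hc_fin by blast
  have vb: "b = (0, 0, snd (snd b))" if "b \<in> supp f" for b
    using Hc_valid[OF f, of b] that by (cases b) (auto simp: supp_def valid_def)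
  have "hmul 1 w \<gamma> (bas (0,0,a)) f t = (\<Sum>b\<in>supp f. f b * mb 1 w \<gamma> (0,0,a) b t)"
    unfolding hmul_def supp_bas by (simp add: bas_apply)
  also have "\<dots> = (\<Sum>b\<in>supp f. if b = (0, 0, k - a) \<and> j = 0 \<and> aa = 0 then f b else 0)"
  proof (rule sum.cong[OF refl])
    fix b assume b: "b \<in> supp f"
    have "mb 1 w \<gamma> (0,0,a) b t = bas (0, 0, a + snd (snd b)) t"
      using vb[OF b] mb1 by metis
    then show "f b * mb 1 w \<gamma> (0,0,a) b t = (if b = (0, 0, k - a) \<and> j = 0 \<and> aa = 0 then f b else 0)"
      using vb[OF b] t by (cases b) (auto simp: bas_apply)
  qed
  also have "\<dots> = sh a f t"
  proof (cases "j = 0 \<and> aa = 0")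
    case True then show ?thesis by (simp add: sum.delta[OF fin] sh_def t) (simp add: supp_def)
  next
    case False then show ?thesis by (auto simp: sh_def t)
  qed
  finally show "hmul 1 w \<gamma> (bas (0,0,a)) f t = sh a f t" .
qed

lemma Hc1_sh: "f \<in> Hc 1 \<Longrightarrow> sh a f \<in> Hc 1"
  using Hc_hmul[of 1 f "bas (0,0,a)"] hmul1_right[of f] Hc_bas[of 1 "(0,0,a)"]
  by (simp add: valid_def)

lemma sh_sh: "sh a (sh b f) = sh b (sh a f)"
  by (auto simp: sh_def algebra_simps)

lemma sh_hsc: "sh a (hsc c f) = hsc c (sh a f)"
  by (auto simp: sh_def hsc_def)

lemma cc_n1:
  fixes \<gamma> \<beta> :: "'k::field"
  assumes g: "\<gamma> = 1" and b: "\<beta> = 1"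
  shows "cc 1 w \<gamma> \<beta> r i k k = bas (0, 0, r + int w * (i - int k)) \<and> (\<forall>l<k. cc 1 w \<gamma> \<beta> r i k l = (\<lambda>_. 0))"
proof (induction k)
  case 0
  show ?case by (simp add: mon_def gxi_def)
next
  case (Suc k)
  define c where "c = r + int w * (i - int k)"
  have Ye: "Ye 1 w = (\<lambda>t. oneH t - bas (0,0,int w) t)" by (simp add: Ye_def mon_def gxi_def)
  have YeH: "(Ye 1 w :: 'k hel) \<in> Hc 1"
    unfolding Ye oneH_def by (intro Hc_diff Hc_bas) (auto simp: valid_def)
  have Gi: "Ginv 1 w = bas (0, 0, - int w)" by (simp add: Ginv_def mon_def gxi_def)
  have SY: "SY 1 w \<gamma> = hsc (-1) (sh (- int w) (Ye 1 w))"
    unfolding SY_def Gi hmul1_right[OF YeH] ..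
  have e1: "hmul 1 w \<gamma> (bas (0,0,c)) (SY 1 w \<gamma>) = sh c (hsc (-1) (sh (- int w) (Ye 1 w)))"
    unfolding SY by (rule hmul1_left) (intro Hc_hsc Hc1_sh YeH)
  have e2: "hmul 1 w \<gamma> (Ye 1 w) (bas (0,0,c)) = sh c (Ye 1 w)"
    by (rule hmul1_right[OF YeH])
  have e3: "hmul 1 w \<gamma> (sh c (Ye 1 w)) (Ginv 1 w) = sh (- int w) (sh c (Ye 1 w))"
    unfolding Gi by (rule hmul1_right) (intro Hc1_sh YeH)
  have key: "hadd (hmul 1 w \<gamma> (bas (0,0,c)) (SY 1 w \<gamma>))
               (hsc 1 (hmul 1 w \<gamma> (hmul 1 w \<gamma> (Ye 1 w) (bas (0,0,c))) (Ginv 1 w))) = (\<lambda>_. 0)"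
    unfolding e1 e2 e3
    by (rule ext) (auto simp: hadd_def hsc_def sh_def split: prod.splits simp: algebra_simps)
  have cck: "cc 1 w \<gamma> \<beta> r i k k = bas (0,0,c)" using Suc.IH c_def by simp
  have top: "cc 1 w \<gamma> \<beta> r i (Suc k) (Suc k) = bas (0, 0, r + int w * (i - int (Suc k)))"
  proof -
    have "cc 1 w \<gamma> \<beta> r i (Suc k) (Suc k) = hmul 1 w \<gamma> (cc 1 w \<gamma> \<beta> r i k k) (Ginv 1 w)" by simp
    also have "\<dots> = bas (0, 0, c + - int w)" unfolding cck Gi hmul_bas_bas mb1 ..
    finally show ?thesis by (simp add: c_def algebra_simps)
  qed
  have low: "cc 1 w \<gamma> \<beta> r i (Suc k) l = (\<lambda>_. 0)" if l: "l < Suc k" for l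
  proof (cases "l = k")
    case True
    show ?thesis
    proof (cases "k = 0")
      case True
      then show ?thesis using key cck \<open>l = k\<close> b by simp
    next
      case False
      then have "cc 1 w \<gamma> \<beta> r i k (k - 1) = (\<lambda>_. 0)" using Suc.IH by simp
      then show ?thesis using key cck \<open>l = k\<close> b g False
        by (simp add: hadd_def)
    qed
  next
    case False
    then have lk: "l < k" using l by simp
    then have z: "cc 1 w \<gamma> \<beta> r i k l = (\<lambda>_. 0)" using Suc.IH by simp
    show ?thesis
    proof (cases "l = 0")
      case True then show ?thesis using z by simp
    next
      case False
      then have "cc 1 w \<gamma> \<beta> r i k (l - 1) = (\<lambda>_. 0)" using Suc.IH lk by simp
      then show ?thesis using z False lk by simp
    qed
  qed
  show ?case using top low by blast
qed

section \<open>The case n > 1: algebra\<close>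

lemma Hc_cc:
  fixes \<gamma> :: "'k::field"
  assumes n: "0 < n" and Y: "(Ye n w :: 'k hel) \<in> Hc n" and G: "(Ginv n w :: 'k hel) \<in> Hc n" and S: "SY n w \<gamma> \<in> Hc n"
  shows "cc n w \<gamma> \<beta> r i k l \<in> Hc n"
proof (induction k arbitrary: l)
  case 0
  show ?case using n by (simp add: Hc_mon Hc_zero)
next
  case (Suc k)
  show ?case using Suc.IH Y G S
    by (auto intro!: Hc_hmul[OF n] Hc_hadd Hc_hsc simp: Hc_zero)
qed

locale Hn =
  fixes n w :: nat and \<gamma> :: "'k::field"
  assumes n1: "1 < n"
begin

abbreviation "Y0 \<equiv> (1::nat, 0::nat, 0::int)"
abbreviation "G0 \<equiv> (0::nat, 1::nat, 0::int)"
abbreviation "O0 \<equiv> (0::nat, 0::nat, 0::int)"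

lemma n0: "0 < n" using n1 by simp

lemma Ye_eq: "(Ye n w :: 'k hel) = bas Y0"
  using n1 by (simp add: Ye_def mon_def gxi_def)

lemma Ge_eq: "(Ge n w :: 'k hel) = bas G0"
  using n1 by (simp add: Ge_def mon_def gxi_def)

lemma Xe_eq: "(Xe n w :: 'k hel) = bas (0, 0, 1)"
  using n1 by (simp add: Xe_def mon_def gxi_def)

lemma Ye_Hc: "(Ye n w :: 'k hel) \<in> Hc n"
  unfolding Ye_eq using n1 by (intro Hc_bas) (simp add: valid_def)

lemma Ge_Hc: "(Ge n w :: 'k hel) \<in> Hc n"
  unfolding Ge_eq using n1 by (intro Hc_bas) (simp add: valid_def)

lemma Xe_Hc: "(Xe n w :: 'k hel) \<in> Hc n"
  unfolding Xe_eq using n1 by (intro Hc_bas) (simp add: valid_def)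

lemma Ginv_Hc: "(Ginv n w :: 'k hel) \<in> Hc n"
  unfolding Ginv_def using n1 by (intro Hc_mon) auto

lemma oneH_Hc: "(oneH :: 'k hel) \<in> Hc n"
  unfolding oneH_def using n1 by (intro Hc_bas) (simp add: valid_def)

lemma SY_Hc: "(SY n w \<gamma> :: 'k hel) \<in> Hc n"
  unfolding SY_def by (intro Hc_hsc Hc_hmul n0 Ye_Hc Ginv_Hc)

lemma cc_Hc: "(cc n w \<gamma> \<beta> r i k l :: 'k hel) \<in> Hc n"
  by (rule Hc_cc[OF n0 Ye_Hc Ginv_Hc SY_Hc])

lemma mul_B_Y: "a < n \<Longrightarrow> hmul n w \<gamma> (bas (0,a,k)) (Ye n w) = hsc ((inverse \<gamma>) ^ a) (bas (1,a,k))"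
  unfolding Ye_eq hmul_bas_bas using n1 mb_small[of 0 1 n a 0 w \<gamma> k 0] by simp

lemma mul_Y_B: "a < n \<Longrightarrow> hmul n w \<gamma> (Ye n w) (bas (0,a,k)) = bas (1,a,k)"
  unfolding Ye_eq hmul_bas_bas using n1 mb_small[of 1 0 n 0 a w \<gamma> 0 k] by simp

lemma mul_Y_Yj: "j + 1 < n \<Longrightarrow> hmul n w \<gamma> (Ye n w) (bas (j,0,0)) = bas (j+1,0,0)"
  unfolding Ye_eq hmul_bas_bas using mb_small[of 1 j n 0 0 w \<gamma> 0 0] by simp

lemma mul_Yj_B: "j < n \<Longrightarrow> a < n \<Longrightarrow> hmul n w \<gamma> (bas (j,0,0)) (bas (0,a,k)) = bas (j,a,k)"
  unfolding hmul_bas_bas using mb_small[of j 0 n 0 a w \<gamma> 0 k] by simp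

lemma mul_Ga_G: "a + 1 < n \<Longrightarrow> hmul n w \<gamma> (bas (0,a,0)) (Ge n w) = bas (0,a+1,0)"
  unfolding Ge_eq hmul_bas_bas using mb_small[of 0 0 n a 1 w \<gamma> 0 0] by simp

lemma mul_Gn_G: "hmul n w \<gamma> (bas (0,n-1,0)) (Ge n w) = bas (0,0,int w)"
  unfolding Ge_eq hmul_bas_bas using n1 by (simp add: mb_simp mon_def gxi_def)

lemma mul_X_X: "hmul n w \<gamma> (bas (0,0,k)) (Xe n w) = bas (0,0,k+1)"
  unfolding Xe_eq hmul_bas_bas using n1 mb_small[of 0 0 n 0 0 w \<gamma> k 1] by simp

lemma mul_Ga_X: "a < n \<Longrightarrow> hmul n w \<gamma> (bas (0,a,0)) (bas (0,0,k)) = bas (0,a,k)"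
  unfolding hmul_bas_bas using mb_small[of 0 0 n a 0 w \<gamma> 0 k] by simp

lemma mul_Y_Yn: "hmul n w \<gamma> (Ye n w) (bas (n-1,0,0)) = (\<lambda>t. oneH t - bas (0,0,int w) t)"
  unfolding Ye_eq hmul_bas_bas using n1 by (simp add: mb_simp mon_def gxi_def oneH_def)


lemma DY_eq: "(DY n w :: bidx \<times> bidx \<Rightarrow> 'k) = (\<lambda>q. if q = (Y0, G0) \<or> q = (O0, Y0) then 1 else 0)"
  by (rule ext) (auto simp: DY_def tens_def Ye_eq Ge_eq oneH_def bas_apply split: if_splits)

lemma supp_DY: "supp (DY n w :: bidx \<times> bidx \<Rightarrow> 'k) = {(Y0, G0), (O0, Y0)}"
  by (auto simp: supp_def DY_eq)

lemma supp_tens11: "supp (tens (oneH :: 'k hel) oneH) = {(O0, O0)}"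
  by (auto simp: supp_def tens_def oneH_def bas_apply split: if_splits)

lemma mb_O0: "j < n \<Longrightarrow> a < n \<Longrightarrow> mb n w \<gamma> (j,a,k) O0 = bas (j,a,k)"
  using mb_small[of j 0 n a 0 w \<gamma> k 0] by simp

lemma Dbas1: "(Dbas n w \<gamma> 1 0 0 :: bidx \<times> bidx \<Rightarrow> 'k) = DY n w"
proof
  fix q :: "bidx \<times> bidx"
  obtain t t' where q: "q = (t, t')" by (cases q)
  have "Dbas n w \<gamma> 1 0 0 q = tmul n w \<gamma> (DY n w) (tens oneH oneH) q"
    by (simp add: oneH_def)
  also have "\<dots> = DY n w q"
    unfolding tmul_def q supp_DY supp_tens11 using n1
    by (simp add: mb_O0 tens_def oneH_def bas_apply DY_eq)
  finally show "Dbas n w \<gamma> 1 0 0 q = DY n w q" .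
qed

lemma Delta_bas: "Delta n w \<gamma> (bas b) = Dbas n w \<gamma> (fst b) (fst (snd b)) (snd (snd b))"
  by (rule ext) (simp add: Delta_def bas_apply)

lemma Delta2_Y: "(Delta2 n w \<gamma> (Ye n w) :: bidx \<times> bidx \<times> bidx \<Rightarrow> 'k) =
    (\<lambda>q. if q = (Y0, G0, G0) \<or> q = (O0, Y0, G0) \<or> q = (O0, O0, Y0) then 1 else 0)"
proof
  fix q :: "bidx \<times> bidx \<times> bidx"
  obtain b1 b2 b3 where q: "q = (b1, b2, b3)" by (cases q)
  have DYe: "Delta n w \<gamma> (Ye n w) = (DY n w :: bidx \<times> bidx \<Rightarrow> 'k)"
    unfolding Ye_eq Delta_bas using Dbas1 by simp
  have DYY: "Delta n w \<gamma> (bas Y0) = (DY n w :: bidx \<times> bidx \<Rightarrow> 'k)"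
    unfolding Delta_bas using Dbas1 by simp
  have DO: "Delta n w \<gamma> (bas O0) (b1, b2) = (if b1 = O0 \<and> b2 = O0 then (1::'k) else 0)"
    unfolding Delta_bas by (simp add: tens_def bas_apply)
  have "Delta2 n w \<gamma> (Ye n w) q = (\<Sum>b\<in>{b. DY n w (b, b3) \<noteq> (0::'k)}. DY n w (b, b3) * Delta n w \<gamma> (bas b) (b1, b2))"
    unfolding Delta2_def q DYe by simp
  also have "\<dots> = (if q = (Y0, G0, G0) \<or> q = (O0, Y0, G0) \<or> q = (O0, O0, Y0) then 1 else 0)"
  proof -
    have "b3 = G0 \<or> b3 = Y0 \<or> (b3 \<noteq> G0 \<and> b3 \<noteq> Y0)" by blast
    moreover
    { assume "b3 = G0"
      then have "{b. DY n w (b, b3) \<noteq> (0::'k)} = {Y0}" by (auto simp: DY_eq)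
      then have ?thesis using \<open>b3 = G0\<close> by (simp add: DYY[simplified] DY_eq q) }
    moreover
    { assume "b3 = Y0"
      then have "{b. DY n w (b, b3) \<noteq> (0::'k)} = {O0}" by (auto simp: DY_eq)
      then have ?thesis using \<open>b3 = Y0\<close> by (simp add: DO[simplified] DY_eq q) }
    moreover
    { assume "b3 \<noteq> G0 \<and> b3 \<noteq> Y0"
      then have E: "{b. DY n w (b, b3) \<noteq> (0::'k)} = {}" by (auto simp: DY_eq)
      have ?thesis unfolding E using \<open>b3 \<noteq> G0 \<and> b3 \<noteq> Y0\<close> by (auto simp: q) }
    ultimately show ?thesis by blast
  qed
  finally show "Delta2 n w \<gamma> (Ye n w) q = (if q = (Y0, G0, G0) \<or> q = (O0, Y0, G0) \<or> q = (O0, O0, Y0) then 1 else 0)" .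
qed

lemma Santi_G: "Santi n w \<gamma> (bas G0) = (Ginv n w :: 'k hel)"
  by (rule ext) (simp add: Santi_def bas_apply Ginv_def)

lemma Santi_Y: "Santi n w \<gamma> (bas Y0) = (SY n w \<gamma> :: 'k hel)"
proof -
  have "Santi n w \<gamma> (bas Y0) = hmul n w \<gamma> (mon n w 0 0 0) (SY n w \<gamma> :: 'k hel)"
    by (rule ext) (simp add: Santi_def bas_apply)
  also have "\<dots> = SY n w \<gamma>"
    using hmul_one_left[OF n0 SY_Hc] by (simp add: oneH_def mon_def gxi_def)
  finally show ?thesis .
qed

lemma Santi_O: "Santi n w \<gamma> (bas O0) = (oneH :: 'k hel)"
  by (rule ext) (simp add: Santi_def bas_apply oneH_def mon_def gxi_def)

end


section \<open>Vector space of coordinate functions\<close>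

definition vsc :: "'k::field \<Rightarrow> 'k vec \<Rightarrow> 'k vec" where "vsc c f = (\<lambda>m. c * f m)"

interpretation VS: vector_space "vsc :: 'k::field \<Rightarrow> 'k vec \<Rightarrow> 'k vec"
  by unfold_locales (auto simp: vsc_def fun_eq_iff algebra_simps)

lemma sum_fun_apply: "(\<Sum>x\<in>A. f x) m = (\<Sum>x\<in>A. (f x :: 'a \<Rightarrow> 'b::comm_monoid_add) m)"
  by (induction A rule: infinite_finite_induct) auto

lemma plus_vec: "(x + y :: 'k::field vec) = (\<lambda>m. x m + y m)" by (simp add: plus_fun_def)
lemma zero_vec: "(0 :: 'k::field vec) = (\<lambda>m. 0)" by (simp add: zero_fun_def)

lemma span_comb:
  assumes "finite S" "\<And>b. b \<in> S \<Longrightarrow> f b \<in> VS.span X"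
  shows "(\<lambda>m. \<Sum>b\<in>S. (c b :: 'k::field) * f b m) \<in> VS.span X"
  using assms
proof (induction S rule: finite_induct)
  case empty then show ?case using VS.span_zero[of X] by (simp add: zero_vec)
next
  case (insert a S)
  have "vsc (c a) (f a) + (\<lambda>m. \<Sum>b\<in>S. c b * f b m) \<in> VS.span X"
    using insert by (intro VS.span_add VS.span_scale) auto
  moreover have "vsc (c a) (f a) + (\<lambda>m. \<Sum>b\<in>S. c b * f b m) = (\<lambda>m. \<Sum>b\<in>insert a S. c b * f b m)"
    using insert by (simp add: vsc_def plus_vec)
  ultimately show ?case by simp
qed

locale YDL = Hn n w \<gamma> for n w :: nat and \<gamma> :: "'k::field" +
  fixes p :: nat and act :: "'k hel \<Rightarrow> 'k vec \<Rightarrow> 'k vec" and co :: "'k vec \<Rightarrow> bidx \<Rightarrow> 'k vec"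
    and v :: "'k vec" and \<alpha> \<beta> :: 'k and r i :: int
  assumes YD: "is_YD n w \<gamma> p act co"
    and std: "standard n w p act co v \<alpha> \<beta> r i"
    and bn: "\<beta> ^ n = 1"
    and gn: "\<gamma> ^ n = 1"
    and prim: "\<forall>m. 0 < m \<and> m < n \<longrightarrow> \<gamma> ^ m \<noteq> 1"
    and simple: "is_simple_YD n w \<gamma> p act co"
begin

lemma act_Vc: "h \<in> Hc n \<Longrightarrow> x \<in> Vc p \<Longrightarrow> act h x \<in> Vc p"
  using YD[unfolded is_YD_def, THEN conjunct1] by blast
lemma act_add: "h \<in> Hc n \<Longrightarrow> x \<in> Vc p \<Longrightarrow> y \<in> Vc p \<Longrightarrow> act h (\<lambda>m. x m + y m) = (\<lambda>m. act h x m + act h y m)"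
  using YD[unfolded is_YD_def, THEN conjunct2, THEN conjunct1] by blast
lemma act_scale: "h \<in> Hc n \<Longrightarrow> x \<in> Vc p \<Longrightarrow> act h (\<lambda>m. c * x m) = (\<lambda>m. c * act h x m)"
  using YD[unfolded is_YD_def, THEN conjunct2, THEN conjunct2, THEN conjunct1] by blast
lemma act_hadd: "h \<in> Hc n \<Longrightarrow> h' \<in> Hc n \<Longrightarrow> x \<in> Vc p \<Longrightarrow> act (hadd h h') x = (\<lambda>m. act h x m + act h' x m)"
  using YD[unfolded is_YD_def, THEN conjunct2, THEN conjunct2, THEN conjunct2, THEN conjunct1] by blast
lemma act_hsc: "h \<in> Hc n \<Longrightarrow> x \<in> Vc p \<Longrightarrow> act (hsc c h) x = (\<lambda>m. c * act h x m)"
  using YD[unfolded is_YD_def, THEN conjunct2, THEN conjunct2, THEN conjunct2, THEN conjunct2, THEN conjunct1] by blast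
lemma act_one: "x \<in> Vc p \<Longrightarrow> act oneH x = x"
  using YD[unfolded is_YD_def, THEN conjunct2, THEN conjunct2, THEN conjunct2, THEN conjunct2, THEN conjunct2, THEN conjunct1] by blast
lemma act_mul: "h \<in> Hc n \<Longrightarrow> h' \<in> Hc n \<Longrightarrow> x \<in> Vc p \<Longrightarrow> act (hmul n w \<gamma> h h') x = act h (act h' x)"
  using YD[unfolded is_YD_def, THEN conjunct2, THEN conjunct2, THEN conjunct2, THEN conjunct2, THEN conjunct2, THEN conjunct2, THEN conjunct1] by blast
lemma co_fin: "x \<in> Vc p \<Longrightarrow> finite (suppV (co x))"
  using YD[unfolded is_YD_def, THEN conjunct2, THEN conjunct2, THEN conjunct2, THEN conjunct2, THEN conjunct2, THEN conjunct2, THEN conjunct2, THEN conjunct1] by blast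
lemma co_Vc: "x \<in> Vc p \<Longrightarrow> co x b \<in> Vc p"
  using YD[unfolded is_YD_def, THEN conjunct2, THEN conjunct2, THEN conjunct2, THEN conjunct2, THEN conjunct2, THEN conjunct2, THEN conjunct2, THEN conjunct1] by blast
lemma co_valid: "x \<in> Vc p \<Longrightarrow> co x b \<noteq> (\<lambda>_. 0) \<Longrightarrow> valid n b"
  using YD[unfolded is_YD_def, THEN conjunct2, THEN conjunct2, THEN conjunct2, THEN conjunct2, THEN conjunct2, THEN conjunct2, THEN conjunct2, THEN conjunct1] by blast
lemma co_add: "x \<in> Vc p \<Longrightarrow> y \<in> Vc p \<Longrightarrow> co (\<lambda>m. x m + y m) b = (\<lambda>m. co x b m + co y b m)"
  using YD[unfolded is_YD_def, THEN conjunct2, THEN conjunct2, THEN conjunct2, THEN conjunct2, THEN conjunct2, THEN conjunct2, THEN conjunct2, THEN conjunct2, THEN conjunct1] by blast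
lemma co_scale: "x \<in> Vc p \<Longrightarrow> co (\<lambda>m. c * x m) b = (\<lambda>m. c * co x b m)"
  using YD[unfolded is_YD_def, THEN conjunct2, THEN conjunct2, THEN conjunct2, THEN conjunct2, THEN conjunct2, THEN conjunct2, THEN conjunct2, THEN conjunct2, THEN conjunct2, THEN conjunct1] by blast
lemma YDc: "h \<in> Hc n \<Longrightarrow> x \<in> Vc p \<Longrightarrow> co (act h x) t =
        (\<lambda>m. \<Sum>q\<in>supp (Delta2 n w \<gamma> h). \<Sum>b\<in>suppV (co x).
           Delta2 n w \<gamma> h q
           * hmul n w \<gamma> (hmul n w \<gamma> (bas (fst q)) (bas b)) (Santi n w \<gamma> (bas (snd (snd q)))) t
           * act (bas (fst (snd q))) (co x b) m)"
  using YD[unfolded is_YD_def, THEN conjunct2, THEN conjunct2, THEN conjunct2, THEN conjunct2, THEN conjunct2, THEN conjunct2, THEN conjunct2, THEN conjunct2, THEN conjunct2, THEN conjunct2, THEN conjunct2, THEN conjunct2] by blast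

lemma v_Vc: "v \<in> Vc p" and v_nz: "v \<noteq> (\<lambda>_. 0)" and al_nz: "\<alpha> \<noteq> 0" and be_nz: "\<beta> \<noteq> 0"
  and act_X_v: "act (Xe n w) v = (\<lambda>m. \<alpha> * v m)" and act_G_v: "act (Ge n w) v = (\<lambda>m. \<beta> * v m)"
  and co_v: "co v = (\<lambda>b. if b = (0, fst (gxi n w i r), snd (gxi n w i r)) then v else (\<lambda>_. 0))"
  using std unfolding standard_def by blast+

lemma Vc_zero: "(\<lambda>_. 0) \<in> Vc p" by (simp add: Vc_def)

lemma Vc_sum: "(\<And>l. l \<in> L \<Longrightarrow> f l \<in> Vc p) \<Longrightarrow> (\<lambda>m. \<Sum>l\<in>L. c l * f l m) \<in> Vc p"
  by (simp add: Vc_def)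

lemma Vc_scale: "x \<in> Vc p \<Longrightarrow> (\<lambda>m. c * x m) \<in> Vc p"
  by (simp add: Vc_def)

lemma Vc_add: "x \<in> Vc p \<Longrightarrow> y \<in> Vc p \<Longrightarrow> (\<lambda>m. x m + y m) \<in> Vc p"
  by (simp add: Vc_def)

lemma act_zero: "h \<in> Hc n \<Longrightarrow> act h (\<lambda>_. 0) = (\<lambda>_. 0)"
  using act_scale[of h "\<lambda>_. 0" 0] Vc_zero by simp

lemma co_zero: "co (\<lambda>_. 0) b = (\<lambda>_. 0)"
  using co_scale[of "\<lambda>_. 0" 0 b] Vc_zero by simp

lemma act_sum:
  assumes h: "h \<in> Hc n" and L: "finite L" and f: "\<And>l. l \<in> L \<Longrightarrow> f l \<in> Vc p"
  shows "act h (\<lambda>m. \<Sum>l\<in>L. c l * f l m) = (\<lambda>m. \<Sum>l\<in>L. c l * act h (f l) m)"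
  using L f
proof (induction L rule: finite_induct)
  case empty then show ?case using act_zero[OF h] by simp
next
  case (insert x F)
  have "act h (\<lambda>m. \<Sum>l\<in>insert x F. c l * f l m) = act h (\<lambda>m. c x * f x m + (\<Sum>l\<in>F. c l * f l m))"
    using insert by simp
  also have "\<dots> = (\<lambda>m. act h (\<lambda>m. c x * f x m) m + act h (\<lambda>m. \<Sum>l\<in>F. c l * f l m) m)"
    using insert by (intro act_add h Vc_scale Vc_sum) auto
  also have "\<dots> = (\<lambda>m. \<Sum>l\<in>insert x F. c l * act h (f l) m)"
    using insert by (simp add: act_scale[OF h])
  finally show ?case .
qed

lemma co_sum:
  assumes L: "finite L" and f: "\<And>l. l \<in> L \<Longrightarrow> f l \<in> Vc p"
  shows "co (\<lambda>m. \<Sum>l\<in>L. c l * f l m) b = (\<lambda>m. \<Sum>l\<in>L. c l * co (f l) b m)"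
  using L f
proof (induction L rule: finite_induct)
  case empty then show ?case using co_zero by simp
next
  case (insert x F)
  have "co (\<lambda>m. \<Sum>l\<in>insert x F. c l * f l m) b = co (\<lambda>m. c x * f x m + (\<Sum>l\<in>F. c l * f l m)) b"
    using insert by simp
  also have "\<dots> = (\<lambda>m. co (\<lambda>m. c x * f x m) b m + co (\<lambda>m. \<Sum>l\<in>F. c l * f l m) b m)"
    using insert by (intro co_add Vc_scale Vc_sum) auto
  also have "\<dots> = (\<lambda>m. \<Sum>l\<in>insert x F. c l * co (f l) b m)"
    using insert by (simp add: co_scale)
  finally show ?case .
qed

definition u :: "nat \<Rightarrow> 'k vec" where "u l = (act (Ye n w) ^^ l) v"

lemma u_0: "u 0 = v" by (simp add: u_def)
lemma u_Suc: "u (Suc l) = act (Ye n w) (u l)" by (simp add: u_def)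

lemma u_Vc: "u l \<in> Vc p"
  by (induction l) (simp_all add: u_0 u_Suc v_Vc act_Vc Ye_Hc)

lemma basH: "j < n \<Longrightarrow> a < n \<Longrightarrow> (bas (j,a,k) :: 'k hel) \<in> Hc n"
  by (intro Hc_bas) (simp add: valid_def)

lemma act_X0_v: "\<exists>c. act (bas (0,0,k)) v = (\<lambda>m. c * v m)"
proof (induction k rule: int_induct[where k=0])
  case base
  show ?case using act_one[OF v_Vc] by (intro exI[of _ 1]) (simp add: oneH_def)
next
  case (step1 k)
  then obtain c where c: "act (bas (0,0,k)) v = (\<lambda>m. c * v m)" by blast
  have "act (bas (0,0,k+1)) v = act (bas (0,0,k)) (act (Xe n w) v)"
    using mul_X_X[of k] act_mul[OF _ Xe_Hc v_Vc, of "bas (0,0,k)"] Hc_bas[of n "(0,0,k)"] n0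
    by (simp add: valid_def)
  also have "\<dots> = (\<lambda>m. (\<alpha> * c) * v m)"
    unfolding act_X_v using act_scale[OF basH v_Vc, of 0 0 k] n0 c
    by (simp add: mult.assoc)
  finally show ?case by blast
next
  case (step2 k)
  then obtain c where c: "act (bas (0,0,k)) v = (\<lambda>m. c * v m)" by blast
  have "act (bas (0,0,k)) v = act (bas (0,0,k-1)) (act (Xe n w) v)"
    using mul_X_X[of "k-1"] act_mul[OF _ Xe_Hc v_Vc, of "bas (0,0,k-1)"] Hc_bas[of n "(0,0,k-1)"] n0
    by (simp add: valid_def)
  also have "\<dots> = (\<lambda>m. \<alpha> * act (bas (0,0,k-1)) v m)"
    unfolding act_X_v using act_scale[OF _ v_Vc, of "bas (0,0,k-1)"] Hc_bas[of n "(0,0,k-1)"] n0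
    by (simp add: valid_def)
  finally have "act (bas (0,0,k-1)) v = (\<lambda>m. (inverse \<alpha> * c) * v m)"
    using c al_nz by (auto simp: fun_eq_iff field_simps)
  then show ?case by blast
qed


lemma act_Ga_v: "a < n \<Longrightarrow> act (bas (0,a,0)) v = (\<lambda>m. \<beta> ^ a * v m)"
proof (induction a)
  case 0 then show ?case using act_one[OF v_Vc] by (simp add: oneH_def)
next
  case (Suc a)
  have "act (bas (0,Suc a,0)) v = act (bas (0,a,0)) (act (Ge n w) v)"
    using mul_Ga_G[of a] act_mul[OF basH Ge_Hc v_Vc, of 0 a 0] Suc by simp
  also have "\<dots> = (\<lambda>m. \<beta> ^ Suc a * v m)"
    unfolding act_G_v using act_scale[OF basH v_Vc, of 0 a 0] Suc by (simp add: mult_ac)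
  finally show ?case .
qed

lemma act_Xw_v: "act (bas (0,0,int w)) v = v"
proof -
  have "act (bas (0,0,int w)) v = act (bas (0,n-1,0)) (act (Ge n w) v)"
    using mul_Gn_G act_mul[OF basH Ge_Hc v_Vc, of 0 "n-1" 0] n1 by simp
  also have "\<dots> = (\<lambda>m. \<beta> ^ n * v m)"
  proof -
    have e: "\<beta> ^ (n-1) * \<beta> = \<beta> ^ n" using n0 by (metis Suc_diff_1 power_Suc2)
    have "act (bas (0,n-1,0)) (\<lambda>m. \<beta> * v m) = (\<lambda>m. \<beta> * (\<beta> ^ (n-1) * v m))"
      using act_scale[OF basH v_Vc, of 0 "n-1" 0 \<beta>] act_Ga_v[of "n-1"] n1 by simp
    also have "\<dots> = (\<lambda>m. \<beta> ^ n * v m)" by (simp add: e[symmetric] mult_ac)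
    finally show ?thesis unfolding act_G_v .
  qed
  finally show ?thesis using bn by simp
qed

lemma act_B_v: "a < n \<Longrightarrow> \<exists>c. act (bas (0,a,k)) v = (\<lambda>m. c * v m)"
proof -
  assume a: "a < n"
  obtain c where c: "act (bas (0,0,k)) v = (\<lambda>m. c * v m)" using act_X0_v by blast
  have "act (bas (0,a,k)) v = act (bas (0,a,0)) (act (bas (0,0,k)) v)"
    using mul_Ga_X[OF a, of k] act_mul[OF basH basH v_Vc, of 0 a 0 0 0 k] a n0 by simp
  also have "\<dots> = (\<lambda>m. (c * \<beta> ^ a) * v m)"
    unfolding c using act_scale[OF basH v_Vc, of 0 a 0] act_Ga_v[OF a] a n0 by (simp add: mult_ac)
  finally show ?thesis by blast
qed

lemma act_B_u:
  assumes a: "a < n" and c: "act (bas (0,a,k)) v = (\<lambda>m. c * v m)"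
  shows "act (bas (0,a,k)) (u l) = (\<lambda>m. (inverse \<gamma> ^ (a * l) * c) * u l m)"
proof (induction l)
  case 0 then show ?case using c by (simp add: u_0)
next
  case (Suc l)
  have B: "(bas (0,a,k) :: 'k hel) \<in> Hc n" using a n0 by (intro basH)
  have B1: "(bas (1,a,k) :: 'k hel) \<in> Hc n" using a n1 by (intro basH)
  have "act (bas (0,a,k)) (u (Suc l)) = act (hmul n w \<gamma> (bas (0,a,k)) (Ye n w)) (u l)"
    unfolding u_Suc using act_mul[OF B Ye_Hc u_Vc] by simp
  also have "\<dots> = (\<lambda>m. inverse \<gamma> ^ a * act (bas (1,a,k)) (u l) m)"
    unfolding mul_B_Y[OF a] by (rule act_hsc[OF B1 u_Vc])
  also have "act (bas (1,a,k)) (u l) = act (Ye n w) (act (bas (0,a,k)) (u l))"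
    unfolding mul_Y_B[OF a, symmetric] by (rule act_mul[OF Ye_Hc B u_Vc])
  also have "\<dots> = (\<lambda>m. (inverse \<gamma> ^ (a * l) * c) * u (Suc l) m)"
    unfolding Suc u_Suc by (rule act_scale[OF Ye_Hc u_Vc])
  finally show ?case by (simp add: power_add mult_ac)
qed

lemma act_Yj_u: "j < n \<Longrightarrow> act (bas (j,0,0)) (u l) = u (l + j)"
proof (induction j)
  case 0 then show ?case using act_one[OF u_Vc] by (simp add: oneH_def)
next
  case (Suc j)
  have "act (bas (Suc j,0,0)) (u l) = act (Ye n w) (act (bas (j,0,0)) (u l))"
    using mul_Y_Yj[of j] act_mul[OF Ye_Hc basH u_Vc, of j 0 0 l] Suc by simp
  then show ?case using Suc by (simp add: u_Suc)
qed

lemma u_n: "u n = (\<lambda>_. 0)"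
proof -
  have "u n = act (Ye n w) (u (n-1))" using n1 u_Suc[of "n-1"] by simp
  also have "u (n-1) = act (bas (n-1,0,0)) v" using act_Yj_u[of "n-1" 0] n1 by (simp add: u_0)
  also have "act (Ye n w) (act (bas (n-1,0,0)) v) = act (\<lambda>t. oneH t - bas (0,0,int w) t) v"
    using act_mul[OF Ye_Hc basH v_Vc, of "n-1" 0 0] n1 mul_Y_Yn by simp
  also have "(\<lambda>t. oneH t - bas (0,0,int w) t) = hadd oneH (hsc (-1) (bas (0,0,int w)))"
    by (simp add: hadd_def hsc_def fun_eq_iff)
  also have "act \<dots> v = (\<lambda>m. act oneH v m + (-1) * act (bas (0,0,int w)) v m)"
    using act_hadd[OF oneH_Hc Hc_hsc[OF basH] v_Vc] act_hsc[OF basH v_Vc] n0 by simp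
  also have "\<dots> = (\<lambda>_. 0)" using act_one[OF v_Vc] act_Xw_v by simp
  finally show ?thesis .
qed

lemma act_G_u: "act (Ge n w) (u l) = (\<lambda>m. (\<beta> * inverse \<gamma> ^ l) * u l m)"
  using act_B_u[of 1 0 \<beta> l] act_Ga_v[of 1] n1 Ge_eq by (simp add: mult.commute)

lemma act_bas_u: "valid n b \<Longrightarrow> \<exists>c. act (bas b) (u l) = (\<lambda>m. c * u (l + fst b) m)"
proof -
  assume vb: "valid n b"
  obtain j a k where b: "b = (j,a,k)" by (cases b)
  have j: "j < n" and a: "a < n" using vb b by (auto simp: valid_def)
  obtain c where c: "act (bas (0,a,k)) v = (\<lambda>m. c * v m)" using act_B_v[OF a] by blast
  have "act (bas b) (u l) = act (bas (j,0,0)) (act (bas (0,a,k)) (u l))"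
  proof -
    have H1: "(bas (j,0,0) :: 'k hel) \<in> Hc n" using j n0 by (intro basH)
    have H2: "(bas (0,a,k) :: 'k hel) \<in> Hc n" using a n0 by (intro basH)
    show ?thesis unfolding b mul_Yj_B[OF j a, of k, symmetric] by (rule act_mul[OF H1 H2 u_Vc])
  qed
  also have "\<dots> = (\<lambda>m. (inverse \<gamma> ^ (a * l) * c) * u (l + j) m)"
    unfolding act_B_u[OF a c] using act_scale[OF basH u_Vc, of j 0 0] act_Yj_u[OF j] j n0 by simp
  finally show ?thesis using b by auto
qed


abbreviation "C k l \<equiv> cc n w \<gamma> \<beta> r i k l"

lemma sumB_T1:
  assumes B: "finite B" "supp h \<subseteq> B"
  shows "(\<Sum>b\<in>B. h b * hmul n w \<gamma> (hmul n w \<gamma> (Ye n w) (bas b)) X t) = hmul n w \<gamma> (hmul n w \<gamma> (Ye n w) h) X t"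
proof -
  have "hmul n w \<gamma> (Ye n w) h = (\<lambda>s. \<Sum>b\<in>B. h b * hmul n w \<gamma> (Ye n w) (bas b) s)"
    by (rule ext) (rule hmul_lin_right[OF B])
  then show ?thesis
    using hmul_comb_left[OF B(1), where F="\<lambda>b. hmul n w \<gamma> (Ye n w) (bas b)" and c=h and g=X and t=t
        and n=n and w=w and \<gamma>=\<gamma>] finite_supp_hmul[OF Hc_fin[OF Ye_Hc]] by simp
qed

lemma sumB_T2:
  assumes B: "finite B" "supp h \<subseteq> B" and vB: "\<And>b. b \<in> B \<Longrightarrow> valid n b"
  shows "(\<Sum>b\<in>B. h b * hmul n w \<gamma> (hmul n w \<gamma> oneH (bas b)) X t) = hmul n w \<gamma> h X t"
proof -
  have "(\<Sum>b\<in>B. h b * hmul n w \<gamma> (hmul n w \<gamma> oneH (bas b)) X t) = (\<Sum>b\<in>B. h b * hmul n w \<gamma> (bas b) X t)"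
    by (rule sum.cong[OF refl]) (simp add: hmul_one_left[OF n0 Hc_bas[OF vB]])
  also have "\<dots> = hmul n w \<gamma> h X t" by (rule hmul_lin_left[OF B, symmetric])
  finally show ?thesis .
qed

lemma cc_Suc_t:
  assumes l: "l \<le> Suc k"
  shows "C (Suc k) l t =
     (if l \<le> k then \<beta> * inverse \<gamma> ^ l * hmul n w \<gamma> (hmul n w \<gamma> (Ye n w) (C k l)) (Ginv n w) t
                    + hmul n w \<gamma> (C k l) (SY n w \<gamma>) t else 0)
     + (if 0 < l then hmul n w \<gamma> (C k (l - 1)) (Ginv n w) t else 0)"
  using l by (auto simp: hadd_def hsc_def not_less_eq_eq)

lemma sum_shift_CF:
  fixes A P :: "nat \<Rightarrow> 'k" and U :: "nat \<Rightarrow> 'k"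
  shows "(\<Sum>l\<le>Suc k. ((if l \<le> k then A l else 0) + (if 0 < l then P (l - 1) else 0)) * U l)
       = (\<Sum>l\<le>k. A l * U l + P l * U (Suc l))"
proof -
  have "(\<Sum>l\<le>Suc k. ((if l \<le> k then A l else 0) + (if 0 < l then P (l - 1) else 0)) * U l)
      = (\<Sum>l\<le>Suc k. (if l \<le> k then A l else 0) * U l) + (\<Sum>l\<le>Suc k. (if 0 < l then P (l - 1) else 0) * U l)"
    by (simp add: distrib_right sum.distrib)
  also have "(\<Sum>l\<le>Suc k. (if l \<le> k then A l else 0) * U l) = (\<Sum>l\<le>k. A l * U l)"
    by (simp add: sum.atMost_Suc)
  also have "(\<Sum>l\<le>Suc k. (if 0 < l then P (l - 1) else 0) * U l) = (\<Sum>l\<le>k. P l * U (Suc l))"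
    by (subst sum.atMost_Suc_shift) simp
  finally show ?thesis by (simp add: sum.distrib)
qed

lemma supp3: "supp (\<lambda>q. if q = a \<or> q = b \<or> q = c then (1::'k) else 0) = {a, b, c}"
  by (auto simp: supp_def)

lemma CF_step_expand:
  "co (u (Suc k)) t = (\<lambda>m. \<Sum>b\<in>suppV (co (u k)).
        hmul n w \<gamma> (hmul n w \<gamma> (Ye n w) (bas b)) (Ginv n w) t * act (Ge n w) (co (u k) b) m
      + hmul n w \<gamma> (hmul n w \<gamma> oneH (bas b)) (Ginv n w) t * act (Ye n w) (co (u k) b) m
      + hmul n w \<gamma> (hmul n w \<gamma> oneH (bas b)) (SY n w \<gamma>) t * act oneH (co (u k) b) m)"
  unfolding u_Suc YDc[OF Ye_Hc u_Vc] Delta2_Y supp3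
  by (simp add: sum.distrib Santi_G Santi_Y Santi_O Santi_G[simplified] Santi_Y[simplified]
      Santi_O[simplified] Ye_eq Ge_eq oneH_def[symmetric] add.assoc)


lemma CF: "co (u k) b = (\<lambda>m. \<Sum>l\<le>k. C k l b * u l m)"
proof (induction k arbitrary: b)
  case 0
  show ?case by (rule ext) (simp add: co_v u_0 mon_def bas_apply)
next
  case (Suc k)
  define t where "t = b"
  define S where "S = suppV (co (u k))"
  define B where "B = S \<union> (\<Union>l\<le>k. supp (C k l))"
  have finB: "finite B" unfolding B_def S_def using co_fin[OF u_Vc] Hc_fin[OF cc_Hc] by auto
  have SB: "S \<subseteq> B" and CB: "\<And>l. l \<le> k \<Longrightarrow> supp (C k l) \<subseteq> B" unfolding B_def by auto
  have vB: "valid n b" if bB: "b \<in> B" for b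
  proof -
    { assume "b \<in> S" then have ?thesis unfolding S_def suppV_def using co_valid[OF u_Vc] by blast }
    moreover
    { assume "b \<notin> S" then obtain l where "C k l b \<noteq> 0" using bB unfolding B_def by (auto simp: supp_def)
      then have ?thesis using Hc_valid[OF cc_Hc] by blast }
    ultimately show ?thesis by blast
  qed
  define T1 where "T1 b = hmul n w \<gamma> (hmul n w \<gamma> (Ye n w) (bas b)) (Ginv n w) t" for b
  define T2 where "T2 b = hmul n w \<gamma> (hmul n w \<gamma> oneH (bas b)) (Ginv n w) t" for b
  define T3 where "T3 b = hmul n w \<gamma> (hmul n w \<gamma> oneH (bas b)) (SY n w \<gamma>) t" for b
  define F where "F b m = T1 b * act (Ge n w) (co (u k) b) m + T2 b * act (Ye n w) (co (u k) b) m
      + T3 b * act oneH (co (u k) b) m" for b m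
  define P1 where "P1 l = hmul n w \<gamma> (hmul n w \<gamma> (Ye n w) (C k l)) (Ginv n w) t" for l
  define P2 where "P2 l = hmul n w \<gamma> (C k l) (Ginv n w) t" for l
  define P3 where "P3 l = hmul n w \<gamma> (C k l) (SY n w \<gamma>) t" for l
  have e1: "co (u (Suc k)) t = (\<lambda>m. \<Sum>b\<in>S. F b m)"
    unfolding CF_step_expand S_def F_def T1_def T2_def T3_def ..
  have e2: "(\<Sum>b\<in>S. F b m) = (\<Sum>b\<in>B. F b m)" for m
  proof (rule sum.mono_neutral_left[OF finB SB], rule ballI)
    fix b assume "b \<in> B - S"
    then have "co (u k) b = (\<lambda>_. 0)" unfolding S_def suppV_def by auto
    then show "F b m = 0" unfolding F_def using act_zero Ge_Hc Ye_Hc oneH_Hc by simp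
  qed
  have e3: "F b m = (\<Sum>l\<le>k. C k l b * (T1 b * (\<beta> * inverse \<gamma> ^ l) * u l m + T2 b * u (Suc l) m + T3 b * u l m))"
    for b m
  proof -
    have a1: "act (Ge n w) (co (u k) b) m = (\<Sum>l\<le>k. C k l b * ((\<beta> * inverse \<gamma> ^ l) * u l m))"
      unfolding Suc.IH act_sum[OF Ge_Hc finite_atMost u_Vc] act_G_u ..
    have a2: "act (Ye n w) (co (u k) b) m = (\<Sum>l\<le>k. C k l b * u (Suc l) m)"
      unfolding Suc.IH act_sum[OF Ye_Hc finite_atMost u_Vc] u_Suc ..
    have a3: "act oneH (co (u k) b) m = (\<Sum>l\<le>k. C k l b * u l m)"
    proof -
      have "(\<lambda>m. \<Sum>l\<le>k. C k l b * u l m) \<in> Vc p" by (rule Vc_sum) (rule u_Vc)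
      then show ?thesis unfolding Suc.IH by (simp add: act_one)
    qed
    show ?thesis unfolding F_def a1 a2 a3
      by (simp add: sum_distrib_left sum.distrib algebra_simps)
  qed
  have e4: "(\<Sum>b\<in>B. F b m) = (\<Sum>l\<le>k. P1 l * (\<beta> * inverse \<gamma> ^ l) * u l m + P2 l * u (Suc l) m + P3 l * u l m)" for m
  proof -
    have "(\<Sum>b\<in>B. F b m) = (\<Sum>l\<le>k. \<Sum>b\<in>B. C k l b * (T1 b * (\<beta> * inverse \<gamma> ^ l) * u l m + T2 b * u (Suc l) m + T3 b * u l m))"
      unfolding e3 by (rule sum.swap)
    also have "\<dots> = (\<Sum>l\<le>k. (\<Sum>b\<in>B. C k l b * T1 b) * (\<beta> * inverse \<gamma> ^ l) * u l m
         + (\<Sum>b\<in>B. C k l b * T2 b) * u (Suc l) m + (\<Sum>b\<in>B. C k l b * T3 b) * u l m)"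
      by (rule sum.cong[OF refl]) (simp add: sum_distrib_right distrib_left sum.distrib mult.assoc)
    also have "\<dots> = (\<Sum>l\<le>k. P1 l * (\<beta> * inverse \<gamma> ^ l) * u l m + P2 l * u (Suc l) m + P3 l * u l m)"
    proof (rule sum.cong[OF refl])
      fix l assume "l \<in> {..k}"
      then have lB: "supp (C k l) \<subseteq> B" using CB by simp
      have "(\<Sum>b\<in>B. C k l b * T1 b) = P1 l" unfolding T1_def P1_def by (rule sumB_T1[OF finB lB])
      moreover have "(\<Sum>b\<in>B. C k l b * T2 b) = P2 l" unfolding T2_def P2_def by (rule sumB_T2[OF finB lB vB])
      moreover have "(\<Sum>b\<in>B. C k l b * T3 b) = P3 l" unfolding T3_def P3_def by (rule sumB_T2[OF finB lB vB])
      ultimately show "(\<Sum>b\<in>B. C k l b * T1 b) * (\<beta> * inverse \<gamma> ^ l) * u l m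
         + (\<Sum>b\<in>B. C k l b * T2 b) * u (Suc l) m + (\<Sum>b\<in>B. C k l b * T3 b) * u l m
         = P1 l * (\<beta> * inverse \<gamma> ^ l) * u l m + P2 l * u (Suc l) m + P3 l * u l m" by simp
    qed
    finally show ?thesis .
  qed
  have e5: "(\<Sum>l\<le>Suc k. C (Suc k) l t * u l m) = (\<Sum>l\<le>k. P1 l * (\<beta> * inverse \<gamma> ^ l) * u l m + P2 l * u (Suc l) m + P3 l * u l m)" for m
  proof -
    have "(\<Sum>l\<le>Suc k. C (Suc k) l t * u l m) = (\<Sum>l\<le>Suc k.
        ((if l \<le> k then \<beta> * inverse \<gamma> ^ l * P1 l + P3 l else 0) + (if 0 < l then P2 (l - 1) else 0)) * u l m)"
      by (rule sum.cong[OF refl]) (simp only: atMost_iff cc_Suc_t P1_def P2_def P3_def)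
    also have "\<dots> = (\<Sum>l\<le>k. (\<beta> * inverse \<gamma> ^ l * P1 l + P3 l) * u l m + P2 l * u (Suc l) m)"
      by (rule sum_shift_CF)
    also have "\<dots> = (\<Sum>l\<le>k. P1 l * (\<beta> * inverse \<gamma> ^ l) * u l m + P2 l * u (Suc l) m + P3 l * u l m)"
      by (simp add: algebra_simps)
    finally show ?thesis .
  qed
  show ?case using e1 e2 e4 e5 unfolding t_def by (simp add: fun_eq_iff)
qed


lemma gam_nz: "\<gamma> \<noteq> 0"
proof
  assume "\<gamma> = 0" then show False using gn n0 by (simp add: power_0_left)
qed

lemma eig_inj:
  assumes l: "l < n" and x: "x < n" and e: "\<beta> * inverse \<gamma> ^ l = \<beta> * inverse \<gamma> ^ x"
  shows "l = x"
proof (rule ccontr)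
  assume ne: "l \<noteq> x"
  have e2: "\<gamma> ^ l = \<gamma> ^ x" using e be_nz gam_nz by (simp add: power_inverse)
  have key: "\<gamma> ^ (b - a) = 1" if "a < b" "\<gamma> ^ a = \<gamma> ^ b" for a b
  proof -
    have "\<gamma> ^ b = \<gamma> ^ a * \<gamma> ^ (b - a)" using that by (metis le_add_diff_inverse less_imp_le power_add)
    then show ?thesis using that gam_nz by simp
  qed
  show False
  proof (cases "l < x")
    case True
    then show False using key[OF True e2] prim x by auto
  next
    case False
    then have "x < l" using ne by simp
    then show False using key[OF \<open>x < l\<close> e2[symmetric]] prim l by auto
  qed
qed

lemma EV:
  assumes L: "finite L" "L \<subseteq> {..<n}" and nz: "\<And>l. l \<in> L \<Longrightarrow> u l \<noteq> (\<lambda>_. 0)"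
    and z: "\<And>m. (\<Sum>l\<in>L. c l * u l m) = 0"
  shows "\<forall>l\<in>L. c l = 0"
  using L nz z
proof (induction L arbitrary: c rule: finite_induct)
  case empty then show ?case by simp
next
  case (insert x F)
  define lam where "lam l = \<beta> * inverse \<gamma> ^ l" for l
  have z0: "(\<lambda>m. \<Sum>l\<in>insert x F. c l * u l m) = (\<lambda>_. 0)" using insert.prems by simp
  have "act (Ge n w) (\<lambda>m. \<Sum>l\<in>insert x F. c l * u l m) = (\<lambda>m. \<Sum>l\<in>insert x F. c l * (lam l * u l m))"
    unfolding act_sum[OF Ge_Hc finite.insertI[OF insert.hyps(1)] u_Vc] act_G_u lam_def ..
  then have z1: "(\<Sum>l\<in>insert x F. c l * (lam l * u l m)) = 0" for m
    unfolding z0 act_zero[OF Ge_Hc] by (metis)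
  have "(\<Sum>l\<in>F. (c l * (lam l - lam x)) * u l m) = 0" for m
  proof -
    have "(\<Sum>l\<in>F. (c l * (lam l - lam x)) * u l m)
        = (\<Sum>l\<in>insert x F. c l * (lam l * u l m)) - lam x * (\<Sum>l\<in>insert x F. c l * u l m)"
      using insert.hyps by (simp add: sum_distrib_left sum_subtractf[symmetric] algebra_simps)
    then show ?thesis using z1[of m] insert.prems(3)[of m] by simp
  qed
  then have cF: "\<forall>l\<in>F. c l * (lam l - lam x) = 0"
    using insert.IH[of "\<lambda>l. c l * (lam l - lam x)"] insert.prems by auto
  have cF0: "\<forall>l\<in>F. c l = 0"
  proof
    fix l assume lF: "l \<in> F"
    have "lam l \<noteq> lam x"
      using eig_inj[of l x] lF insert.hyps(2) insert.prems(1) unfolding lam_def by auto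
    then show "c l = 0" using cF lF by auto
  qed
  have "c x * u x m = 0" for m
    using insert.prems(3)[of m] cF0 insert.hyps by simp
  then have "c x = 0" using insert.prems(2)[of x] by (auto simp: fun_eq_iff)
  then show ?case using cF0 by simp
qed

lemma u_zero_after: "u k = (\<lambda>_. 0) \<Longrightarrow> k \<le> l \<Longrightarrow> u l = (\<lambda>_. 0)"
proof (induction l)
  case 0 then show ?case by simp
next
  case (Suc l)
  then show ?case
    by (cases "k = Suc l") (auto simp: u_Suc act_zero[OF Ye_Hc])
qed

definition q :: nat where "q = (LEAST l. u l = (\<lambda>_. 0))"

lemma q_props: "u q = (\<lambda>_. 0)" "q \<le> n" "0 < q" "\<And>l. l < q \<Longrightarrow> u l \<noteq> (\<lambda>_. 0)"
proof -
  show "u q = (\<lambda>_. 0)" unfolding q_def by (rule LeastI[of _ n]) (rule u_n)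
  show "q \<le> n" unfolding q_def by (rule Least_le) (rule u_n)
  show "\<And>l. l < q \<Longrightarrow> u l \<noteq> (\<lambda>_. 0)" unfolding q_def using not_less_Least by blast
  show "0 < q" using \<open>u q = (\<lambda>_. 0)\<close> v_nz u_0 by (cases q) auto
qed


abbreviation W where "W \<equiv> VS.span (range u)"

lemma Vc_subspace: "VS.subspace (Vc p)"
  unfolding VS.subspace_def by (auto simp: Vc_def vsc_def)

lemma W_Vc: "W \<subseteq> Vc p"
  by (rule VS.span_minimal[OF _ Vc_subspace]) (auto simp: u_Vc)

lemma Hc_comb: "finite S \<Longrightarrow> (\<And>b. b \<in> S \<Longrightarrow> valid n b) \<Longrightarrow> (\<lambda>t. \<Sum>b\<in>S. c b * bas b t) \<in> Hc n"
proof (induction S rule: finite_induct)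
  case empty then show ?case using Hc_zero by simp
next
  case (insert a S)
  have "hadd (hsc (c a) (bas a)) (\<lambda>t. \<Sum>b\<in>S. c b * bas b t) \<in> Hc n"
    using insert by (intro Hc_hadd Hc_hsc Hc_bas) auto
  moreover have "hadd (hsc (c a) (bas a)) (\<lambda>t. \<Sum>b\<in>S. c b * bas b t) = (\<lambda>t. \<Sum>b\<in>insert a S. c b * bas b t)"
    using insert by (simp add: hadd_def hsc_def)
  ultimately show ?case by simp
qed

lemma act_Hcomb:
  assumes x: "x \<in> Vc p"
  shows "finite S \<Longrightarrow> (\<And>b. b \<in> S \<Longrightarrow> valid n b) \<Longrightarrow>
    act (\<lambda>t. \<Sum>b\<in>S. c b * bas b t) x = (\<lambda>m. \<Sum>b\<in>S. c b * act (bas b) x m)"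
proof (induction S rule: finite_induct)
  case empty
  have "act (hsc 0 oneH) x = (\<lambda>m. 0)" using act_hsc[OF oneH_Hc x] by simp
  then show ?case by (simp add: hsc_def)
next
  case (insert a S)
  have "(\<lambda>t. \<Sum>b\<in>insert a S. c b * bas b t) = hadd (hsc (c a) (bas a)) (\<lambda>t. \<Sum>b\<in>S. c b * bas b t)"
    using insert by (simp add: hadd_def hsc_def)
  moreover have "act (hadd (hsc (c a) (bas a)) (\<lambda>t. \<Sum>b\<in>S. c b * bas b t)) x
      = (\<lambda>m. c a * act (bas a) x m + act (\<lambda>t. \<Sum>b\<in>S. c b * bas b t) x m)"
    using insert act_hadd[OF Hc_hsc[OF Hc_bas] Hc_comb x] act_hsc[OF Hc_bas x] by simp
  ultimately show ?case using insert by simp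
qed

lemma h_decomp: "h \<in> Hc n \<Longrightarrow> h = (\<lambda>t. \<Sum>b\<in>supp h. h b * bas b t)"
proof (rule ext)
  fix t assume h: "h \<in> Hc n"
  have fin: "finite (supp h)" using h Hc_fin by blast
  have "(\<Sum>b\<in>supp h. h b * bas b t) = (\<Sum>b\<in>supp h. if t = b then h b else 0)"
    by (rule sum.cong) (auto simp: bas_apply)
  also have "\<dots> = (if t \<in> supp h then h t else 0)" using fin by (simp add: sum.delta)
  also have "\<dots> = h t" by (simp add: supp_def)
  finally show "h t = (\<Sum>b\<in>supp h. h b * bas b t)" by simp
qed

lemma act_u_W: "h \<in> Hc n \<Longrightarrow> act h (u l) \<in> W"
proof -
  assume h: "h \<in> Hc n"
  have fin: "finite (supp h)" using h Hc_fin by blast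
  have vs: "\<And>b. b \<in> supp h \<Longrightarrow> valid n b" using h Hc_valid by (auto simp: supp_def)
  have "act h (u l) = (\<lambda>m. \<Sum>b\<in>supp h. h b * act (bas b) (u l) m)"
    by (subst h_decomp[OF h]) (rule act_Hcomb[OF u_Vc fin vs])
  also have "\<dots> \<in> W"
  proof (rule span_comb[OF fin])
    fix b assume "b \<in> supp h"
    then obtain c where c: "act (bas b) (u l) = (\<lambda>m. c * u (l + fst b) m)" using act_bas_u vs by blast
    have "vsc c (u (l + fst b)) \<in> W" by (intro VS.span_scale VS.span_base) simp
    then show "act (bas b) (u l) \<in> W" unfolding c by (simp add: vsc_def)
  qed
  finally show ?thesis .
qed

lemma act_W: assumes h: "h \<in> Hc n" and xW: "x \<in> W" shows "act h x \<in> W"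
proof -
  have "x \<in> W \<and> act h x \<in> W"
    using xW
  proof (induction rule: VS.span_induct_alt)
    case base
    then show ?case using act_zero[OF h] VS.span_zero by (simp add: zero_vec)
  next
    case (step c x y)
    obtain l where x: "x = u l" using step by auto
    have yV: "y \<in> Vc p" using step W_Vc by blast
    have e: "vsc c x + y = (\<lambda>m. c * u l m + y m)" by (simp add: x vsc_def plus_vec)
    have "act h (\<lambda>m. c * u l m + y m) = (\<lambda>m. c * act h (u l) m + act h y m)"
      using act_add[OF h Vc_scale[OF u_Vc] yV] act_scale[OF h u_Vc] by simp
    also have "\<dots> = vsc c (act h (u l)) + act h y" by (simp add: vsc_def plus_vec)
    also have "\<dots> \<in> W" using step act_u_W[OF h] by (intro VS.span_add VS.span_scale) auto
    finally have "act h (vsc c x + y) \<in> W" unfolding e .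
    moreover have "vsc c x + y \<in> W"
    proof -
      have "x \<in> W" using step by (intro VS.span_base) auto
      then show ?thesis using step by (intro VS.span_add VS.span_scale) auto
    qed
    ultimately show ?case by blast
  qed
  then show ?thesis by blast
qed


lemma co_u_W: "co (u l) b \<in> W"
  unfolding CF by (rule span_comb) (auto intro: VS.span_base)

lemma co_W: assumes xW: "x \<in> W" shows "co x b \<in> W"
proof -
  have "x \<in> W \<and> co x b \<in> W"
    using xW
  proof (induction rule: VS.span_induct_alt)
    case base
    then show ?case using co_zero VS.span_zero by (simp add: zero_vec)
  next
    case (step c x y)
    obtain l where x: "x = u l" using step by auto
    have yV: "y \<in> Vc p" using step W_Vc by blast
    have e: "vsc c x + y = (\<lambda>m. c * u l m + y m)" by (simp add: x vsc_def plus_vec)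
    have "co (\<lambda>m. c * u l m + y m) b = (\<lambda>m. c * co (u l) b m + co y b m)"
      using co_add[OF Vc_scale[OF u_Vc] yV] co_scale[OF u_Vc] by simp
    also have "\<dots> = vsc c (co (u l) b) + co y b" by (simp add: vsc_def plus_vec)
    also have "\<dots> \<in> W" using step co_u_W by (intro VS.span_add VS.span_scale) auto
    finally have "co (vsc c x + y) b \<in> W" unfolding e .
    moreover have "vsc c x + y \<in> W"
    proof -
      have "x \<in> W" using step by (intro VS.span_base) auto
      then show ?thesis using step by (intro VS.span_add VS.span_scale) auto
    qed
    ultimately show ?case by blast
  qed
  then show ?thesis by blast
qed

lemma W_eq: "W = Vc p"
proof -
  have S: "\<forall>W. W \<subseteq> Vc p \<and> (\<lambda>_. 0) \<in> W \<and>
         (\<forall>u\<in>W. \<forall>v\<in>W. (\<lambda>m. u m + v m) \<in> W) \<and> (\<forall>c. \<forall>v\<in>W. (\<lambda>m. c * v m) \<in> W) \<and>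
         (\<forall>h\<in>Hc n. \<forall>v\<in>W. act h v \<in> W) \<and> (\<forall>v\<in>W. \<forall>b. co v b \<in> W)
       \<longrightarrow> W = {\<lambda>_. 0} \<or> W = Vc p"
    using simple unfolding is_simple_YD_def by blast
  have c1: "(\<lambda>_. 0) \<in> W" using VS.span_zero by (simp add: zero_vec)
  have c2: "\<forall>x\<in>W. \<forall>y\<in>W. (\<lambda>m. x m + y m) \<in> W"
  proof (intro ballI)
    fix x y assume "x \<in> W" "y \<in> W"
    then have "x + y \<in> W" by (rule VS.span_add)
    then show "(\<lambda>m. x m + y m) \<in> W" by (simp add: plus_vec)
  qed
  have c3: "\<forall>c. \<forall>x\<in>W. (\<lambda>m. c * x m) \<in> W"
  proof (intro allI ballI)
    fix c x assume "x \<in> W"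
    then have "vsc c x \<in> W" by (rule VS.span_scale)
    then show "(\<lambda>m. c * x m) \<in> W" by (simp add: vsc_def)
  qed
  have c4: "\<forall>h\<in>Hc n. \<forall>x\<in>W. act h x \<in> W" using act_W by blast
  have c5: "\<forall>x\<in>W. \<forall>b. co x b \<in> W" using co_W by blast
  have "W = {\<lambda>_. 0} \<or> W = Vc p" using S W_Vc c1 c2 c3 c4 c5 by blast
  moreover have "v \<in> W" using VS.span_base[of v "range u"] u_0 by (metis rangeI)
  ultimately show ?thesis using v_nz by blast
qed

definition e :: "nat \<Rightarrow> 'k vec" where "e j = (\<lambda>m. if m = j then 1 else 0)"

lemma e_inj: "inj e"
  by (rule injI) (auto simp: e_def fun_eq_iff split: if_splits)

lemma E_indep: "VS.independent (e ` {..p})"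
proof
  assume "VS.dependent (e ` {..p})"
  then obtain c where c: "\<exists>x\<in>e ` {..p}. c x \<noteq> 0" "(\<Sum>x\<in>e ` {..p}. vsc (c x) x) = 0"
    using VS.dependent_finite[of "e ` {..p}"] by auto
  then obtain j where j: "j \<le> p" "c (e j) \<noteq> 0" by auto
  have "0 = (\<Sum>x\<in>e ` {..p}. vsc (c x) x) j" using c(2) by (simp add: zero_vec)
  also have "\<dots> = (\<Sum>x\<in>e ` {..p}. c x * x j)" by (simp add: sum_fun_apply vsc_def)
  also have "\<dots> = (\<Sum>x\<in>e ` {..p}. if x = e j then c x else 0)"
  proof (rule sum.cong[OF refl])
    fix x assume "x \<in> e ` {..p}"
    then obtain j' where x: "x = e j'" by auto
    show "c x * x j = (if x = e j then c x else 0)"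
      unfolding x by (simp only: inj_eq[OF e_inj]) (auto simp: e_def)
  qed
  also have "\<dots> = c (e j)" using j by (simp add: sum.delta')
  finally show False using j by simp
qed

lemma E_card: "card (e ` {..p}) = Suc p"
  using e_inj by (simp add: card_image inj_on_subset)

lemma Vc_span_E: "Vc p \<subseteq> VS.span (e ` {..p})"
proof
  fix f :: "'k vec" assume f: "f \<in> Vc p"
  have "(\<lambda>m. \<Sum>j\<in>{..p}. f j * e j m) \<in> VS.span (e ` {..p})"
    by (rule span_comb) (auto intro: VS.span_base)
  moreover have "(\<lambda>m. \<Sum>j\<in>{..p}. f j * e j m) = f"
  proof
    fix m
    have "(\<Sum>j\<in>{..p}. f j * e j m) = (\<Sum>j\<in>{..p}. if m = j then f j else 0)"
      by (rule sum.cong) (auto simp: e_def)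
    also have "\<dots> = f m" using f by (auto simp: sum.delta Vc_def)
    finally show "(\<Sum>j\<in>{..p}. f j * e j m) = f m" .
  qed
  ultimately show "f \<in> VS.span (e ` {..p})" by simp
qed

lemma u_inj: "inj_on u {..<q}"
proof (rule inj_onI)
  fix a b assume a: "a \<in> {..<q}" and b: "b \<in> {..<q}" and eq: "u a = u b"
  have an: "a < n" and bn': "b < n" using a b q_props(2) by auto
  have "(\<lambda>m. (\<beta> * inverse \<gamma> ^ a) * u a m) = (\<lambda>m. (\<beta> * inverse \<gamma> ^ b) * u a m)"
    using act_G_u[of a] act_G_u[of b] eq by simp
  moreover obtain m where "u a m \<noteq> 0" using q_props(4)[of a] a by (auto simp: fun_eq_iff)
  ultimately have "\<beta> * inverse \<gamma> ^ a = \<beta> * inverse \<gamma> ^ b"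
    by (metis (no_types, lifting) mult_right_cancel)
  then show "a = b" using eig_inj an bn' by blast
qed

lemma U_indep: "VS.independent (u ` {..<q})"
proof
  assume "VS.dependent (u ` {..<q})"
  then obtain c where c: "\<exists>x\<in>u ` {..<q}. c x \<noteq> 0" "(\<Sum>x\<in>u ` {..<q}. vsc (c x) x) = 0"
    using VS.dependent_finite[of "u ` {..<q}"] by auto
  have z: "(\<Sum>l\<in>{..<q}. c (u l) * u l m) = 0" for m
  proof -
    have "0 = (\<Sum>x\<in>u ` {..<q}. vsc (c x) x) m" using c(2) by (simp add: zero_vec)
    also have "\<dots> = (\<Sum>l\<in>{..<q}. vsc (c (u l)) (u l)) m" by (simp add: sum.reindex[OF u_inj])
    also have "\<dots> = (\<Sum>l\<in>{..<q}. c (u l) * u l m)" by (simp add: sum_fun_apply vsc_def)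
    finally show ?thesis by simp
  qed
  have "\<forall>l\<in>{..<q}. c (u l) = 0"
    by (rule EV[where c="\<lambda>l. c (u l)"]) (use q_props z in auto)
  then show False using c(1) by auto
qed

lemma q_eq: "q = Suc p"
proof -
  have W_U: "W \<subseteq> VS.span (u ` {..<q})"
  proof (rule VS.span_minimal)
    show "range u \<subseteq> VS.span (u ` {..<q})"
    proof
      fix x assume "x \<in> range u"
      then obtain l where x: "x = u l" by auto
      show "x \<in> VS.span (u ` {..<q})"
      proof (cases "l < q")
        case True then show ?thesis using x by (intro VS.span_base) auto
      next
        case False
        then have "u l = (\<lambda>_. 0)" using u_zero_after[OF q_props(1)] by simp
        then show ?thesis using x VS.span_zero by (simp add: zero_vec)
      qed
    qed
  qed simp
  have EV': "e ` {..p} \<subseteq> Vc p" by (auto simp: e_def Vc_def)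
  have "e ` {..p} \<subseteq> VS.span (u ` {..<q})" using EV' W_eq W_U by blast
  then have "card (e ` {..p}) \<le> card (u ` {..<q})"
    using VS.independent_span_bound[OF finite_imageI[OF finite_lessThan] E_indep] by blast
  moreover have "u ` {..<q} \<subseteq> VS.span (e ` {..p})" using u_Vc Vc_span_E by blast
  then have "card (u ` {..<q}) \<le> card (e ` {..p})"
    using VS.independent_span_bound[OF finite_imageI[OF finite_atMost] U_indep] by blast
  ultimately show ?thesis using E_card card_image[OF u_inj] by simp
qed

lemma result: "\<forall>l\<le>p. C (Suc p) l = (\<lambda>_. 0)"
proof (intro allI impI ext)
  fix l b assume l: "l \<le> p"
  have uS: "u (Suc p) = (\<lambda>_. 0)" using q_props(1) q_eq by simp
  have z: "(\<Sum>l\<in>{..p}. C (Suc p) l b * u l m) = 0" for m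
  proof -
    have c0: "co (u (Suc p)) b = (\<lambda>_. 0)" using uS co_zero by simp
    have "(\<lambda>m. \<Sum>l\<le>Suc p. C (Suc p) l b * u l m) = co (u (Suc p)) b" by (rule CF[symmetric])
    then have "(\<Sum>l\<le>Suc p. C (Suc p) l b * u l m) = 0" unfolding c0 by (rule fun_cong)
    moreover have "(\<Sum>l\<le>Suc p. C (Suc p) l b * u l m) = (\<Sum>l\<le>p. C (Suc p) l b * u l m) + C (Suc p) (Suc p) b * u (Suc p) m"
      by (rule sum.atMost_Suc)
    ultimately show ?thesis using uS by (simp add: atMost_def del: cc.simps)
  qed
  have "\<forall>l\<in>{..p}. C (Suc p) l b = 0"
    by (rule EV[where c="\<lambda>l. C (Suc p) l b"]) (use q_props q_eq z in auto)
  then show "C (Suc p) l b = 0" using l by simp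
qed

end


theorem lemma3p15:
  fixes n w p :: nat and \<gamma> \<alpha> \<beta> :: "'k::field_char_0" and r i :: int
    and act :: "'k hel \<Rightarrow> 'k vec \<Rightarrow> 'k vec" and co :: "'k vec \<Rightarrow> bidx \<Rightarrow> 'k vec"
    and v :: "'k vec"
  assumes alg_closed: "\<forall>q :: 'k poly. degree q > 0 \<longrightarrow> (\<exists>z. poly q z = 0)"
    and n_pos: "0 < n" and w_pos: "0 < w"
    and prim: "\<gamma> ^ n = 1" "\<forall>m. 0 < m \<and> m < n \<longrightarrow> \<gamma> ^ m \<noteq> 1"
    and simple: "is_simple_YD n w \<gamma> p act co"
    and std: "standard n w p act co v \<alpha> \<beta> r i"
    and beta_n: "\<beta> ^ n = 1"
  shows "\<forall>l\<le>p. cc n w \<gamma> \<beta> r i (Suc p) l = (\<lambda>_. 0)"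
proof (cases "n = 1")
  case True
  have g: "\<gamma> = 1" using prim(1) True by simp
  have b: "\<beta> = 1" using beta_n True by simp
  show ?thesis using cc_n1[OF g b, of w r i "Suc p"] True by auto
next
  case False
  then have n1: "1 < n" using n_pos by simp
  have YD: "is_YD n w \<gamma> p act co" using simple unfolding is_simple_YD_def by blast
  interpret YDL n w \<gamma> p act co v \<alpha> \<beta> r i
    by unfold_locales (use n1 YD std beta_n prim simple in auto)
  show ?thesis by (rule result)
qed

end
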